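(* The linear map $\Theta^d:\mathbf H^d_{ho}\to\mathbf{FQSym}^d$ defined on $d$-decorated heap-ordered forests by $\Theta^d((\mathbb F,\ell))=\sum_{\sigma\in S_{\mathbb F}}(\sigma,\ell)$ is an isomorphism of graded Hopf algebras.
   Context: Fix $d\ge1$. A rooted forest is a finite graph each of whose components is a tree with a distinguished root; edges are oriented towards the roots and $v\twoheadrightarrow w$ means there is an oriented path from $v$ to $w\ne v$. An ordered forest with $n$ vertices is a rooted forest with a total order of its vertices, identifying them with $\{1,\dots,n\}$; it is heap-ordered if $i\twoheadrightarrow j\Rightarrow i>j$. A $d$-decorated heap-ordered forest is a pair $(\mathbb F,\ell)$ with $\mathbb F$ heap-ordered with $n$ vertices and $\ell:\{1,\dots,n\}\to\{1,\dots,d\}$. $\mathbf H^d_{ho}$ has basis the $d$-decorated heap-ordered forests; product $(\mathbb F,\ell)(\mathbb G,\ell')=(\mathbb F\mathbb G,\ell\otimes\ell')$ where $\mathbb F\mathbb G$ is the disjoint union with the vertices of $\mathbb G$ shifted by $k=|\mathbb F|$ and $(\ell\otimes\ell')(i)=\ell(i)$ for $i\le k$, $\ell'(i-k)$ for $i>k$; coproduct $\Delta(\mathbb F,\ell)=\sum_{\vec v}\mathrm{Roo}_{\vec v}(\mathbb F,\ell)\otimes\mathrm{Lea}_{\vec v}(\mathbb F,\ell)$ over admissible cuts $\vec v$ (possibly empty sets of pairwise $\twoheadrightarrow$-incomparable vertices), $\mathrm{Lea}_{\vec v}$ being the subforest on $\vec v$ and all $w$ with $w\twoheadrightarrow v$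 for some $v\in\vec v$, $\mathrm{Roo}_{\vec v}$ the subforest on the other vertices, orders and decorations restricted (each vertex keeps its decoration). $\Sigma_n$: symmetric group; $(\sigma\otimes\tau)(i)=\sigma(i)$ ($i\le k$), $k+\tau(i-k)$ ($i>k$); $Sh(k,l)=\{\zeta\in\Sigma_{k+l}:\zeta^{-1}(1)<\dots<\zeta^{-1}(k),\ \zeta^{-1}(k+1)<\dots<\zeta^{-1}(k+l)\}$. A $d$-decorated permutation is a pair $(\sigma,\ell)$ with $\sigma\in\Sigma_n$, $\ell:\{1,\dots,n\}\to\{1,\dots,d\}$, represented by the two-row array with top row $\sigma(1)\ldots\sigma(n)$ and bottom row $\ell(\sigma(1))\ldots\ell(\sigma(n))$. $\mathbf{FQSym}^d$ has basis the $d$-decorated permutations, product $(\sigma,\ell)\cdot(\tau,\ell')=\sum_{\epsilon\in Sh(k,l)}((\sigma\otimes\tau)\circ\epsilon,\ell\otimes\ell')$, and coproduct $\Delta$ sending a two-row array of length $n$ to $\sum_{k=0}^n$ (first $k$ columns)$\otimes$(last $n-k$ columns), where in each piece the top row is standardized (its entries replaced by $1,2,\dots$ preserving relative order) and the bottom row is kept. $S_{\mathbb F}=\{\sigma\in\Sigma_n:i\twoheadrightarrow j\Rightarrow\sigma^{-1}(i)>\sigma^{-1}(j)\}$. *)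

theory Defs
  imports Main
begin

definition supp :: "('b \<Rightarrow> 'k::zero) \<Rightarrow> 'b set" where
  "supp x = {b. x b \<noteq> 0}"

definition fvec :: "'b set \<Rightarrow> ('b \<Rightarrow> 'k::zero) set" where
  "fvec B = {x. finite (supp x) \<and> supp x \<subseteq> B}"

definition bvec :: "'b \<Rightarrow> 'b \<Rightarrow> 'k::{zero,one}" where
  "bvec b = (\<lambda>c. if c = b then 1 else 0)"

definition lin_ext :: "('a \<Rightarrow> 'b \<Rightarrow> 'k::semiring_0) \<Rightarrow> ('a \<Rightarrow> 'k) \<Rightarrow> 'b \<Rightarrow> 'k" where
  "lin_ext f x = (\<lambda>c. \<Sum>a\<in>supp x. x a * f a c)"

definition bilin_ext :: "('a \<Rightarrow> 'b \<Rightarrow> 'c \<Rightarrow> 'k::semiring_0) \<Rightarrow> ('a \<Rightarrow> 'k) \<Rightarrow> ('b \<Rightarrow> 'k) \<Rightarrow> 'c \<Rightarrow> 'k" where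
  "bilin_ext m x y = (\<lambda>c. \<Sum>a\<in>supp x. \<Sum>b\<in>supp y. x a * y b * m a b c)"

text \<open>Tensor product V \<otimes> W of free vector spaces: basis = pairs of basis elements.
  tensor_map f g is f \<otimes> g.\<close>
definition tensor_map ::
  "(('a \<Rightarrow> 'k::semiring_1) \<Rightarrow> 'c \<Rightarrow> 'k) \<Rightarrow> (('b \<Rightarrow> 'k) \<Rightarrow> 'e \<Rightarrow> 'k) \<Rightarrow> ('a \<times> 'b \<Rightarrow> 'k) \<Rightarrow> ('c \<times> 'e) \<Rightarrow> 'k" where
  "tensor_map f g = lin_ext (\<lambda>(a,b) (c,e). f (bvec a) c * g (bvec b) e)"

text \<open>An ordered forest on vertices 0..n-1 is given by its parent list:
  ps!i = Some j means the edge i \<rightarrow> j (towards the root), ps!i = None means i is a root.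
  Decorations are given by the list of labels of the vertices.\<close>

type_synonym dforest = "nat option list \<times> nat list"

definition f_edges :: "nat option list \<Rightarrow> (nat \<times> nat) set" where
  "f_edges ps = {(i,j). i < length ps \<and> ps ! i = Some j}"

definition f_reach :: "nat option list \<Rightarrow> nat \<Rightarrow> nat \<Rightarrow> bool" where
  "f_reach ps i j = ((i,j) \<in> (f_edges ps)\<^sup>+)"

definition ordered_forest :: "nat option list \<Rightarrow> bool" where
  "ordered_forest ps = ((\<forall>i<length ps. \<forall>j. ps ! i = Some j \<longrightarrow> j < length ps)
                         \<and> (\<forall>i. \<not> f_reach ps i i))"

definition heap_ordered :: "nat option list \<Rightarrow> bool" where
  "heap_ordered ps = (ordered_forest ps \<and> (\<forall>i j. f_reach ps i j \<longrightarrow> i > j))"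

definition HF :: "nat \<Rightarrow> dforest set" where
  "HF d = {(ps, l). heap_ordered ps \<and> length l = length ps \<and> (\<forall>x\<in>set l. 1 \<le> x \<and> x \<le> d)}"

definition hdeg :: "dforest \<Rightarrow> nat" where
  "hdeg F = length (fst F)"

definition hf_mult :: "dforest \<Rightarrow> dforest \<Rightarrow> dforest" where
  "hf_mult F G = (fst F @ map (map_option (\<lambda>j. j + length (fst F))) (fst G), snd F @ snd G)"

definition admissible_cuts :: "nat option list \<Rightarrow> nat set set" where
  "admissible_cuts ps = {V. V \<subseteq> {0..<length ps} \<and> (\<forall>v\<in>V. \<forall>w\<in>V. \<not> f_reach ps v w)}"

definition lea_set :: "nat option list \<Rightarrow> nat set \<Rightarrow> nat set" where
  "lea_set ps V = V \<union> {w. w < length ps \<and> (\<exists>v\<in>V. f_reach ps w v)}"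

text \<open>Induced subforest on a vertex set S, order and decorations restricted
  (vertices renumbered increasingly).\<close>
definition sub_forest :: "dforest \<Rightarrow> nat set \<Rightarrow> dforest" where
  "sub_forest F S = (let ps = fst F; l = snd F; xs = sorted_list_of_set S in
     (map (\<lambda>i. case ps ! i of None \<Rightarrow> None
                  | Some j \<Rightarrow> (if j \<in> S then Some (card {s\<in>S. s < j}) else None)) xs,
      map (\<lambda>i. l ! i) xs))"

definition roo :: "dforest \<Rightarrow> nat set \<Rightarrow> dforest" where
  "roo F V = sub_forest F ({0..<length (fst F)} - lea_set (fst F) V)"

definition lea :: "dforest \<Rightarrow> nat set \<Rightarrow> dforest" where
  "lea F V = sub_forest F (lea_set (fst F) V)"

definition H_unit :: "dforest \<Rightarrow> 'k::{zero,one}" where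
  "H_unit = bvec ([], [])"

definition H_mult :: "(dforest \<Rightarrow> 'k::semiring_1) \<Rightarrow> (dforest \<Rightarrow> 'k) \<Rightarrow> dforest \<Rightarrow> 'k" where
  "H_mult = bilin_ext (\<lambda>F G. bvec (hf_mult F G))"

definition H_coprod_basis :: "dforest \<Rightarrow> dforest \<times> dforest \<Rightarrow> 'k::semiring_1" where
  "H_coprod_basis F = (\<lambda>c. \<Sum>V\<in>admissible_cuts (fst F). if (roo F V, lea F V) = c then 1 else 0)"

definition H_coprod :: "(dforest \<Rightarrow> 'k::semiring_1) \<Rightarrow> dforest \<times> dforest \<Rightarrow> 'k" where
  "H_coprod = lin_ext H_coprod_basis"

definition H_counit :: "(dforest \<Rightarrow> 'k::semiring_1) \<Rightarrow> 'k" where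
  "H_counit x = x ([], [])"

text \<open>A decorated permutation (\<sigma>, l) of {0..n-1}: w is the word \<sigma>(0) ... \<sigma>(n-1),
  l ! j is the decoration of j.\<close>

type_synonym dperm = "nat list \<times> nat list"

definition DP :: "nat \<Rightarrow> dperm set" where
  "DP d = {(w, l). distinct w \<and> set w = {0..<length w} \<and> length l = length w
                 \<and> (\<forall>x\<in>set l. 1 \<le> x \<and> x \<le> d)}"

definition pdeg :: "dperm \<Rightarrow> nat" where
  "pdeg p = length (fst p)"

text \<open>Sh(k,l) as words e = \<epsilon>(0)...\<epsilon>(k+l-1); e!i = a means \<epsilon>^{-1}(a) = i.\<close>
definition Sh :: "nat \<Rightarrow> nat \<Rightarrow> nat list set" where
  "Sh k l = {e. distinct e \<and> set e = {0..<k+l} \<and>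
     (\<forall>i<length e. \<forall>j<length e.
        ((e ! i < e ! j \<and> e ! j < k) \<or> (k \<le> e ! i \<and> e ! i < e ! j \<and> e ! j < k + l)) \<longrightarrow> i < j)}"

definition fq_mult_basis :: "dperm \<Rightarrow> dperm \<Rightarrow> dperm \<Rightarrow> 'k::semiring_1" where
  "fq_mult_basis p q = (\<lambda>c. \<Sum>e\<in>Sh (length (fst p)) (length (fst q)).
      if (map (\<lambda>i. (fst p @ map (\<lambda>x. x + length (fst p)) (fst q)) ! i) e, snd p @ snd q) = c
      then 1 else 0)"

definition F_mult :: "(dperm \<Rightarrow> 'k::semiring_1) \<Rightarrow> (dperm \<Rightarrow> 'k) \<Rightarrow> dperm \<Rightarrow> 'k" where
  "F_mult = bilin_ext fq_mult_basis"

definition F_unit :: "dperm \<Rightarrow> 'k::{zero,one}" where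
  "F_unit = bvec ([], [])"

definition std :: "nat list \<Rightarrow> nat list" where
  "std u = map (\<lambda>x. card {y\<in>set u. y < x}) u"

text \<open>The decorated permutation given by a set of columns u (top row entries) of the
  two-row array of (w, l): top row standardized, bottom row kept.\<close>
definition piece :: "nat list \<Rightarrow> nat list \<Rightarrow> dperm" where
  "piece u l = (std u, map (\<lambda>v. l ! v) (sorted_list_of_set (set u)))"

definition fq_coprod_basis :: "dperm \<Rightarrow> dperm \<times> dperm \<Rightarrow> 'k::semiring_1" where
  "fq_coprod_basis p = (\<lambda>c. \<Sum>k\<in>{0..length (fst p)}.
      if (piece (take k (fst p)) (snd p), piece (drop k (fst p)) (snd p)) = c then 1 else 0)"

definition F_coprod :: "(dperm \<Rightarrow> 'k::semiring_1) \<Rightarrow> dperm \<times> dperm \<Rightarrow> 'k" where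
  "F_coprod = lin_ext fq_coprod_basis"

definition F_counit :: "(dperm \<Rightarrow> 'k::semiring_1) \<Rightarrow> 'k" where
  "F_counit x = x ([], [])"

definition S_F :: "nat option list \<Rightarrow> nat list set" where
  "S_F ps = {w. distinct w \<and> set w = {0..<length ps} \<and>
     (\<forall>p<length w. \<forall>q<length w. f_reach ps (w ! p) (w ! q) \<longrightarrow> p > q)}"

definition theta_basis :: "dforest \<Rightarrow> dperm \<Rightarrow> 'k::semiring_1" where
  "theta_basis F = (\<lambda>c. \<Sum>w\<in>S_F (fst F). if (w, snd F) = c then 1 else 0)"

definition Theta :: "(dforest \<Rightarrow> 'k::semiring_1) \<Rightarrow> dperm \<Rightarrow> 'k" where
  "Theta = lin_ext theta_basis"

end

theory Submission
  imports Defs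
begin


lemma supp_finite_fvec: "x \<in> fvec B \<Longrightarrow> finite (supp x)" by (simp add: fvec_def)

lemma lin_ext_superset:
  assumes "finite A" "supp x \<subseteq> A"
  shows "lin_ext f x c = (\<Sum>a\<in>A. x a * f a c)"
proof -
  have "(\<Sum>a\<in>A. x a * f a c) = (\<Sum>a\<in>supp x. x a * f a c)"
    by (rule sum.mono_neutral_right[OF assms(1) assms(2)]) (auto simp: supp_def)
  thus ?thesis by (simp add: lin_ext_def)
qed

lemma lin_ext_ind:
  fixes g :: "'b \<Rightarrow> 'c \<Rightarrow> 'k::semiring_1"
  assumes "finite I"
  shows "lin_ext g (\<lambda>c. \<Sum>i\<in>I. if h i = c then 1 else 0) c' = (\<Sum>i\<in>I. g (h i) c')"
proof -
  let ?y = "\<lambda>c. \<Sum>i\<in>I. if h i = c then (1::'k) else 0"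
  have s: "supp ?y \<subseteq> h ` I"
  proof
    fix b assume "b \<in> supp ?y"
    hence "?y b \<noteq> 0" by (simp add: supp_def)
    show "b \<in> h ` I"
    proof (rule ccontr)
      assume "b \<notin> h ` I"
      hence "?y b = 0" by (intro sum.neutral) auto
      with \<open>?y b \<noteq> 0\<close> show False by simp
    qed
  qed
  have "lin_ext g ?y c' = (\<Sum>b\<in>h ` I. ?y b * g b c')"
    by (rule lin_ext_superset[OF _ s]) (use assms in auto)
  also have "\<dots> = (\<Sum>b\<in>h ` I. \<Sum>i\<in>I. if h i = b then g b c' else 0)"
    by (intro sum.cong refl) (simp add: sum_distrib_right, rule sum.cong, auto)
  also have "\<dots> = (\<Sum>i\<in>I. \<Sum>b\<in>h ` I. if h i = b then g b c' else 0)"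
    by (rule sum.swap)
  also have "\<dots> = (\<Sum>i\<in>I. g (h i) c')"
    using assms by (intro sum.cong refl) (simp add: sum.delta')
  finally show ?thesis .
qed

lemma supp_lin_ext:
  assumes "finite (supp x)" "\<And>a. a \<in> supp x \<Longrightarrow> finite (supp (f a))"
  shows "supp (lin_ext f x) \<subseteq> (\<Union>a\<in>supp x. supp (f a))"
proof
  fix c assume "c \<in> supp (lin_ext f x)"
  hence "(\<Sum>a\<in>supp x. x a * f a c) \<noteq> 0" by (simp add: supp_def lin_ext_def)
  then obtain a where "a \<in> supp x" "f a c \<noteq> 0" by (metis (mono_tags, lifting) mult_zero_right sum.neutral)
  thus "c \<in> (\<Union>a\<in>supp x. supp (f a))" by (auto simp: supp_def)
qed

lemma finite_supp_lin_ext: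
  assumes "finite (supp x)" "\<And>a. a \<in> supp x \<Longrightarrow> finite (supp (f a))"
  shows "finite (supp (lin_ext f x))"
  using supp_lin_ext[OF assms] assms by (meson finite_UN_I finite_subset)

lemma lin_ext_comp:
  fixes x :: "'a \<Rightarrow> 'k::comm_semiring_0"
  assumes "finite (supp x)" "\<And>a. a \<in> supp x \<Longrightarrow> finite (supp (f a))"
  shows "lin_ext g (lin_ext f x) c = (\<Sum>a\<in>supp x. x a * lin_ext g (f a) c)"
proof -
  let ?U = "\<Union>a\<in>supp x. supp (f a)"
  have fU: "finite ?U" using assms by auto
  have "lin_ext g (lin_ext f x) c = (\<Sum>b\<in>?U. lin_ext f x b * g b c)"
    by (rule lin_ext_superset[OF fU supp_lin_ext[OF assms]])
  also have "\<dots> = (\<Sum>b\<in>?U. \<Sum>a\<in>supp x. x a * f a b * g b c)"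
    by (simp add: lin_ext_def sum_distrib_right)
  also have "\<dots> = (\<Sum>a\<in>supp x. \<Sum>b\<in>?U. x a * f a b * g b c)" by (rule sum.swap)
  also have "\<dots> = (\<Sum>a\<in>supp x. x a * lin_ext g (f a) c)"
  proof (rule sum.cong[OF refl])
    fix a assume a: "a \<in> supp x"
    have "lin_ext g (f a) c = (\<Sum>b\<in>?U. f a b * g b c)"
      by (rule lin_ext_superset[OF fU]) (use a in auto)
    thus "(\<Sum>b\<in>?U. x a * f a b * g b c) = x a * lin_ext g (f a) c"
      by (simp add: sum_distrib_left mult.assoc)
  qed
  finally show ?thesis .
qed


definition hforest :: "nat option list \<Rightarrow> bool" where
  "hforest ps = (\<forall>i<length ps. \<forall>j. ps ! i = Some j \<longrightarrow> j < i)"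

lemma f_reach_src: "f_reach ps i j \<Longrightarrow> i < length ps"
  unfolding f_reach_def by (induct rule: trancl_induct) (auto simp: f_edges_def)

lemma f_reach_dec: assumes "hforest ps" "f_reach ps i j" shows "j < i"
  using assms(2) unfolding f_reach_def
  by (induct rule: trancl_induct) (use assms(1) in \<open>auto simp: f_edges_def hforest_def\<close>)

lemma edge_reach: "i < length ps \<Longrightarrow> ps ! i = Some j \<Longrightarrow> f_reach ps i j"
  unfolding f_reach_def f_edges_def by auto

lemma heap_ordered_iff: "heap_ordered ps \<longleftrightarrow> hforest ps"
proof
  assume h: "heap_ordered ps"
  show "hforest ps" unfolding hforest_def
  proof (intro allI impI)
    fix i j assume "i < length ps" "ps ! i = Some j"
    hence "f_reach ps i j" by (rule edge_reach)
    thus "j < i" using h by (auto simp: heap_ordered_def)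
  qed
next
  assume h: "hforest ps"
  show "heap_ordered ps" unfolding heap_ordered_def ordered_forest_def
    using f_reach_dec[OF h] h by (fastforce simp: hforest_def)
qed

lemma S_F_sub: "S_F ps \<subseteq> {w. set w \<subseteq> {0..<length ps} \<and> length w = length ps}"
  unfolding S_F_def using distinct_card by fastforce

lemma finite_S_F: "finite (S_F ps)"
  by (rule finite_subset[OF S_F_sub]) (rule finite_lists_length_eq, simp)

lemma S_F_length: "w \<in> S_F ps \<Longrightarrow> length w = length ps"
  using S_F_sub by blast

lemma theta_basis_val:
  "theta_basis F p = (if fst p \<in> S_F (fst F) \<and> snd p = snd F then 1 else 0)"
proof -
  have "theta_basis F p = (\<Sum>w\<in>S_F (fst F). if w = fst p then (if snd p = snd F then 1 else 0) else 0)"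
    unfolding theta_basis_def by (intro sum.cong refl) (cases p, auto)
  also have "\<dots> = (if fst p \<in> S_F (fst F) \<and> snd p = snd F then 1 else 0)"
    by (simp add: sum.delta' finite_S_F)
  finally show ?thesis .
qed

lemma theta_basis_ind: "theta_basis F = (\<lambda>c. \<Sum>w\<in>S_F (fst F). if (w, snd F) = c then 1 else 0)"
  unfolding theta_basis_def ..

lemma finite_supp_theta: "finite (supp (theta_basis F :: dperm \<Rightarrow> 'k::semiring_1))"
proof -
  have "supp (theta_basis F :: dperm \<Rightarrow> 'k) \<subseteq> (\<lambda>w. (w, snd F)) ` S_F (fst F)"
    by (auto simp: supp_def theta_basis_val split: if_splits)
  thus ?thesis using finite_S_F by (meson finite_imageI finite_subset)
qed

lemma Theta_eval: "finite (supp x) \<Longrightarrow> Theta x p = (\<Sum>F\<in>supp x. x F * theta_basis F p)"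
  unfolding Theta_def lin_ext_def ..

lemma finite_supp_Theta: "finite (supp x) \<Longrightarrow> finite (supp (Theta (x :: dforest \<Rightarrow> 'k::semiring_1)))"
  unfolding Theta_def by (rule finite_supp_lin_ext) (auto intro: finite_supp_theta)

lemma supp_bvec: "supp (bvec b :: 'b \<Rightarrow> 'k::zero_neq_one) = {b}"
  by (auto simp: supp_def bvec_def)

lemma lin_ext_bvec: "lin_ext f (bvec b :: 'b \<Rightarrow> 'k::{semiring_0,zero_neq_one,monoid_mult}) = f b"
proof (rule ext)
  fix c show "lin_ext f (bvec b :: 'b \<Rightarrow> 'k) c = f b c"
    unfolding lin_ext_def supp_bvec by (simp add: bvec_def)
qed

lemma Theta_linear:
  assumes "finite (supp x)" "finite (supp y)"
  shows "Theta (\<lambda>F. c * x F + y F) = (\<lambda>p. c * Theta x p + Theta (y :: dforest \<Rightarrow> 'k::comm_semiring_1) p)"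
proof (rule ext)
  fix p
  let ?A = "supp x \<union> supp y"
  have fA: "finite ?A" using assms by auto
  have 1: "supp (\<lambda>F. c * x F + y F) \<subseteq> ?A" by (auto simp: supp_def)
  have "Theta (\<lambda>F. c * x F + y F) p = (\<Sum>F\<in>?A. (c * x F + y F) * theta_basis F p)"
    unfolding Theta_def by (rule lin_ext_superset[OF fA 1])
  also have "\<dots> = c * (\<Sum>F\<in>?A. x F * theta_basis F p) + (\<Sum>F\<in>?A. y F * theta_basis F p)"
    by (simp add: sum.distrib sum_distrib_left algebra_simps)
  also have "\<dots> = c * Theta x p + Theta y p"
    unfolding Theta_def by (subst (1 2) lin_ext_superset[OF fA]) auto
  finally show "Theta (\<lambda>F. c * x F + y F) p = c * Theta x p + Theta y p" .
qed

lemma S_F_Nil: "S_F [] = {[]}" by (auto simp: S_F_def)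

lemma Nil_in_S_F: "[] \<in> S_F ps \<longleftrightarrow> ps = []" by (auto simp: S_F_def)

lemma Theta_unit: "Theta (H_unit :: dforest \<Rightarrow> 'k::field) = F_unit"
  unfolding H_unit_def Theta_def F_unit_def lin_ext_bvec
  by (rule ext) (auto simp: theta_basis_val S_F_Nil bvec_def)

lemma Theta_counit:
  assumes "x \<in> fvec (HF d)"
  shows "F_counit (Theta x) = (H_counit x :: 'k::field)"
proof -
  have f: "finite (supp x)" using assms by (simp add: fvec_def)
  have "Theta x ([],[]) = (\<Sum>F\<in>supp x. if F = ([],[]) then x F else 0)"
    unfolding Theta_eval[OF f]
    by (intro sum.cong refl) (auto simp: theta_basis_val Nil_in_S_F)
  also have "\<dots> = x ([],[])" using f by (simp add: sum.delta') (simp add: supp_def)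
  finally show ?thesis by (simp add: F_counit_def H_counit_def)
qed

lemma Theta_grading:
  assumes "x \<in> fvec (HF d)" "supp (x :: dforest \<Rightarrow> 'k::field) \<subseteq> {F. hdeg F = n}"
  shows "supp (Theta x) \<subseteq> {p. pdeg p = n}"
proof
  fix p assume "p \<in> supp (Theta x)"
  hence "(\<Sum>F\<in>supp x. x F * theta_basis F p) \<noteq> 0"
    using assms(1) by (simp add: supp_def Theta_eval fvec_def)
  then obtain F where F: "F \<in> supp x" "theta_basis F p \<noteq> (0::'k)"
    by (metis (mono_tags, lifting) mult_zero_right sum.neutral)
  hence "fst p \<in> S_F (fst F)" by (simp add: theta_basis_val split: if_splits)
  thus "p \<in> {p. pdeg p = n}" using F(1) assms(2) S_F_length by (auto simp: pdeg_def hdeg_def)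
qed


abbreviation lx :: "nat list \<Rightarrow> nat list \<Rightarrow> bool" where "lx \<equiv> ord_class.lexordp"

definition Perm :: "nat \<Rightarrow> nat list set" where
  "Perm n = {w. distinct w \<and> set w = {0..<n}}"

lemma Perm_length: "w \<in> Perm n \<Longrightarrow> length w = n"
proof -
  assume "w \<in> Perm n"
  hence "distinct w" "set w = {0..<n}" by (auto simp: Perm_def)
  hence "length w = card {0..<n}" using distinct_card by metis
  thus ?thesis by simp
qed

definition pos :: "nat list \<Rightarrow> nat \<Rightarrow> nat" where
  "pos w i = (THE p. p < length w \<and> w ! p = i)"

lemma pos_prop:
  assumes "distinct w" "i \<in> set w"
  shows "pos w i < length w \<and> w ! pos w i = i"
proof -
  obtain p where p: "p < length w" "w ! p = i" using assms(2) by (auto simp: in_set_conv_nth)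
  have "\<exists>!p. p < length w \<and> w ! p = i"
  proof (rule ex1I[of _ p])
    show "p < length w \<and> w ! p = i" using p by simp
    fix q assume "q < length w \<and> w ! q = i"
    thus "q = p" using nth_eq_iff_index_eq[OF assms(1)] p by auto
  qed
  thus ?thesis unfolding pos_def by (rule theI')
qed

lemma pos_nth: "distinct w \<Longrightarrow> p < length w \<Longrightarrow> pos w (w ! p) = p"
proof -
  assume d: "distinct w" and p: "p < length w"
  have "pos w (w!p) < length w \<and> w ! pos w (w!p) = w ! p" using pos_prop[OF d] p by simp
  thus ?thesis using nth_eq_iff_index_eq[OF d] p by blast
qed

definition nls :: "nat list \<Rightarrow> nat \<Rightarrow> nat option" where
  "nls w i = (if {s. s < pos w i \<and> w ! s < i} = {} then None
              else Some (w ! Max {s. s < pos w i \<and> w ! s < i}))"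

definition psi :: "nat list \<Rightarrow> nat option list" where
  "psi w = map (nls w) [0..<length w]"

lemma nls_Some:
  assumes "nls w i = Some j"
  shows "\<exists>m. m < pos w i \<and> w ! m < i \<and> j = w ! m"
proof -
  let ?C = "{s. s < pos w i \<and> w ! s < i}"
  have ne: "?C \<noteq> {}" and j: "j = w ! Max ?C" using assms by (auto simp: nls_def split: if_splits)
  have "finite ?C" by (rule finite_subset[of _ "{..<pos w i}"]) auto
  hence "Max ?C \<in> ?C" using ne by (rule Max_in)
  thus ?thesis using j by auto
qed

lemma psi_hforest: "hforest (psi w)"
  unfolding hforest_def
proof (intro allI impI)
  fix i j assume "i < length (psi w)" "psi w ! i = Some j"
  hence "nls w i = Some j" by (simp add: psi_def)
  from nls_Some[OF this] show "j < i" by auto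
qed

lemma psi_length[simp]: "length (psi w) = length w" by (simp add: psi_def)

lemma psi_edge_pos:
  assumes "w \<in> Perm n" "i < length (psi w)" "psi w ! i = Some j"
  shows "pos w j < pos w i"
proof -
  have d: "distinct w" and s: "set w = {0..<n}" using assms(1) by (auto simp: Perm_def)
  have ln: "length w = n" using Perm_length[OF assms(1)] .
  from assms(2,3) have "nls w i = Some j" by (simp add: psi_def)
  then obtain m where m: "m < pos w i" "j = w ! m" using nls_Some by blast
  have "i < n" using assms(2) ln by simp
  hence "pos w i < length w" using pos_prop[OF d] s by auto
  hence "pos w j = m" using m pos_nth[OF d] by auto
  thus ?thesis using m by simp
qed

lemma psi_reach_pos:
  assumes "w \<in> Perm n" "f_reach (psi w) i j"
  shows "pos w j < pos w i"
  using assms(2) unfolding f_reach_def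
proof (induct rule: trancl_induct)
  case (base y)
  hence "i < length (psi w)" "psi w ! i = Some y" by (auto simp: f_edges_def)
  thus ?case by (rule psi_edge_pos[OF assms(1)])
next
  case (step y z)
  hence "y < length (psi w)" "psi w ! y = Some z" by (auto simp: f_edges_def)
  hence "pos w z < pos w y" by (rule psi_edge_pos[OF assms(1)])
  thus ?case using step(3) by simp
qed

lemma psi_in_S_F: "w \<in> Perm n \<Longrightarrow> w \<in> S_F (psi w)"
proof -
  assume w: "w \<in> Perm n"
  have d: "distinct w" and s: "set w = {0..<n}" using w by (auto simp: Perm_def)
  have ln: "length w = n" using Perm_length[OF w] .
  show ?thesis unfolding S_F_def
  proof (intro CollectI conjI allI impI)
    show "distinct w" by (rule d)
    show "set w = {0..<length (psi w)}" using s ln by simp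
    fix p q assume pq: "p < length w" "q < length w" "f_reach (psi w) (w ! p) (w ! q)"
    from psi_reach_pos[OF w pq(3)] show "q < p" using pos_nth[OF d] pq by simp
  qed
qed

lemma S_F_Perm: "w \<in> S_F ps \<Longrightarrow> w \<in> Perm (length ps)"
  by (auto simp: S_F_def Perm_def)

lemma first_diff:
  assumes "length u = length v" "u \<noteq> v"
  shows "\<exists>t<length u. take t u = take t v \<and> u ! t \<noteq> v ! t"
proof -
  have ex: "\<exists>t. t < length u \<and> u ! t \<noteq> v ! t"
  proof (rule ccontr)
    assume "\<not> ?thesis"
    hence "u = v" using assms(1) by (intro nth_equalityI) auto
    thus False using assms(2) by simp
  qed
  define t where "t = (LEAST t. t < length u \<and> u ! t \<noteq> v ! t)"
  have t: "t < length u" "u ! t \<noteq> v ! t" using LeastI_ex[OF ex] unfolding t_def by auto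
  have "\<forall>i<t. u ! i = v ! i" using not_less_Least t(1) unfolding t_def by fastforce
  hence "take t u = take t v" using t(1) assms(1) by (intro nth_equalityI) auto
  thus ?thesis using t by blast
qed

lemma lexordp_first_diff:
  assumes "length u = length v" "t < length u" "take t u = take t v" "u ! t < v ! t"
  shows "lx u v"
proof -
  have "u = take t u @ u ! t # drop (Suc t) u" using assms(2) by (simp add: id_take_nth_drop)
  moreover have "v = take t u @ v ! t # drop (Suc t) v" using assms by (metis id_take_nth_drop)
  moreover have "lx (take t u @ u ! t # drop (Suc t) u) (take t u @ v ! t # drop (Suc t) v)"
    by (rule lexordp_append_left_rightI) (rule assms(4))
  ultimately show ?thesis by simp
qed

lemma psi_max:
  assumes w: "w \<in> Perm n" and w': "w' \<in> S_F (psi w)"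
  shows "w' = w \<or> lx w' w"
proof (rule ccontr)
  assume c: "\<not> (w' = w \<or> lx w' w)"
  have d: "distinct w" and s: "set w = {0..<n}" using w by (auto simp: Perm_def)
  have ln: "length w = n" using Perm_length[OF w] .
  have w'P: "w' \<in> Perm n" using S_F_Perm[OF w'] ln by simp
  have d': "distinct w'" and s': "set w' = {0..<n}" using w'P by (auto simp: Perm_def)
  have ln': "length w' = n" using Perm_length[OF w'P] .
  obtain t where t: "t < n" "take t w' = take t w" "w' ! t \<noteq> w ! t"
    using first_diff[of w' w] c ln ln' by auto
  have pre: "\<And>i. i < t \<Longrightarrow> w' ! i = w ! i" using t(2) by (metis nth_take)
  define a where "a = w ! t"
  define b where "b = w' ! t"
  have "\<not> b < a" using lexordp_first_diff[of w' w t] c t ln ln' by (auto simp: a_def b_def)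
  hence ab: "a < b" using t(3) by (simp add: a_def b_def)
  have bn: "b < n" using s' t(1) ln' by (auto simp: b_def)
  have bset: "b \<in> set w" using s bn by simp
  define sb where "sb = pos w b"
  have sb: "sb < n" "w ! sb = b" using pos_prop[OF d bset] ln by (auto simp: sb_def)
  have "sb \<noteq> t" using sb(2) t(3) b_def by auto
  moreover have "\<not> sb < t"
  proof
    assume "sb < t"
    hence "w' ! sb = b" using pre sb by simp
    hence "w' ! sb = w' ! t" by (simp add: b_def)
    moreover have "sb < length w'" "t < length w'" using \<open>sb < t\<close> t(1) ln' by auto
    ultimately have "sb = t" using nth_eq_iff_index_eq[OF d'] by blast
    thus False using \<open>sb < t\<close> by simp
  qed
  ultimately have tsb: "t < sb" by simp
  let ?C = "{s. s < pos w b \<and> w ! s < b}"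
  have tC: "t \<in> ?C" using tsb ab by (simp add: sb_def a_def)
  have fC: "finite ?C" by (rule finite_subset[of _ "{..<pos w b}"]) auto
  define m where "m = Max ?C"
  have mC: "m \<in> ?C" using Max_in[OF fC] tC unfolding m_def by blast
  have tm: "t \<le> m" using Max_ge[OF fC tC] unfolding m_def .
  have "nls w b = Some (w ! m)" using tC by (auto simp: nls_def m_def)
  hence "psi w ! b = Some (w ! m)" using bn ln by (simp add: psi_def)
  hence r: "f_reach (psi w) b (w ! m)" by (intro edge_reach) (use bn ln in auto)
  have mn: "m < n" using mC sb by (auto simp: sb_def)
  have wmset: "w ! m \<in> set w'" using s s' mn ln by auto
  define q where "q = pos w' (w ! m)"
  have q: "q < n" "w' ! q = w ! m" using pos_prop[OF d' wmset] ln' by (auto simp: q_def)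
  have SF: "\<forall>p<length w'. \<forall>q<length w'. f_reach (psi w) (w' ! p) (w' ! q) \<longrightarrow> p > q"
    using w' unfolding S_F_def by blast
  have "f_reach (psi w) (w' ! t) (w' ! q)" using r q(2) by (simp add: b_def)
  hence "t > q" using SF t(1) q(1) ln' by blast
  hence "w ! q = w ! m" using pre q by simp
  hence "q = m" using d q mn ln nth_eq_iff_index_eq by auto
  thus False using tm \<open>t > q\<close> by simp
qed

lemma psi_inj: "inj_on psi (Perm n)"
proof (rule inj_onI)
  fix u v assume u: "u \<in> Perm n" and v: "v \<in> Perm n" and e: "psi u = psi v"
  have 1: "v = u \<or> lx v u" using psi_max[OF u] psi_in_S_F[OF v] e by simp
  have 2: "u = v \<or> lx u v" using psi_max[OF v] psi_in_S_F[OF u] e by simp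
  show "u = v"
  proof (rule ccontr)
    assume "u \<noteq> v"
    hence "lx v u" "lx u v" using 1 2 by auto
    hence "lx u u" by (rule lexordp_trans[rotated])
    thus False by (simp add: lexordp_irreflexive')
  qed
qed

definition Hn :: "nat \<Rightarrow> nat option list set" where
  "Hn n = {ps. length ps = n \<and> hforest ps}"

definition On :: "nat \<Rightarrow> nat option set" where
  "On n = insert None (Some ` {0..<n})"

lemma hforest_snoc: "hforest (ps @ [oo]) \<longleftrightarrow> hforest ps \<and> (\<forall>j. oo = Some j \<longrightarrow> j < length ps)"
proof
  assume h: "hforest (ps @ [oo])"
  have "hforest ps" unfolding hforest_def
  proof (intro allI impI)
    fix i j assume "i < length ps" "ps ! i = Some j"
    thus "j < i" using h[unfolded hforest_def, rule_format, of i j] by (simp add: nth_append)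
  qed
  moreover have "\<forall>j. oo = Some j \<longrightarrow> j < length ps"
    using h[unfolded hforest_def, rule_format, of "length ps"] by simp
  ultimately show "hforest ps \<and> (\<forall>j. oo = Some j \<longrightarrow> j < length ps)" by blast
next
  assume h: "hforest ps \<and> (\<forall>j. oo = Some j \<longrightarrow> j < length ps)"
  show "hforest (ps @ [oo])" unfolding hforest_def
  proof (intro allI impI)
    fix i j assume i: "i < length (ps @ [oo])" "(ps @ [oo]) ! i = Some j"
    show "j < i"
    proof (cases "i < length ps")
      case True thus ?thesis using i h by (auto simp: nth_append hforest_def)
    next
      case False hence "i = length ps" using i by simp
      thus ?thesis using i h by simp
    qed
  qed
qed

lemma Hn_Suc: "Hn (Suc n) = (\<lambda>(ps, oo). ps @ [oo]) ` (Hn n \<times> On n)"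
proof (rule set_eqI)
  fix qs show "qs \<in> Hn (Suc n) \<longleftrightarrow> qs \<in> (\<lambda>(ps, oo). ps @ [oo]) ` (Hn n \<times> On n)"
  proof
    assume q: "qs \<in> Hn (Suc n)"
    hence lq: "length qs = Suc n" and hq: "hforest qs" by (auto simp: Hn_def)
    define ps where "ps = butlast qs"
    define oo where "oo = last qs"
    have "qs \<noteq> []" using lq by auto
    hence qs: "qs = ps @ [oo]" by (simp add: ps_def oo_def)
    have lp: "length ps = n" using lq by (simp add: ps_def)
    have "hforest ps \<and> (\<forall>j. oo = Some j \<longrightarrow> j < length ps)"
      using hq unfolding qs hforest_snoc .
    hence "ps \<in> Hn n" using lp by (auto simp: Hn_def)
    moreover have "oo \<in> On n"
    proof (cases oo)
      case (Some j) thus ?thesis using \<open>hforest ps \<and> _\<close> lp by (auto simp: On_def)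
    qed (simp add: On_def)
    ultimately have "ps \<in> Hn n" "oo \<in> On n" by auto
    thus "qs \<in> (\<lambda>(ps, oo). ps @ [oo]) ` (Hn n \<times> On n)" using qs by (intro image_eqI[of _ _ "(ps, oo)"]) auto
  next
    assume "qs \<in> (\<lambda>(ps, oo). ps @ [oo]) ` (Hn n \<times> On n)"
    then obtain ps oo where qs: "qs = ps @ [oo]" and p: "ps \<in> Hn n" and o: "oo \<in> On n" by auto
    have "hforest ps" "length ps = n" using p by (auto simp: Hn_def)
    moreover have "\<forall>j. oo = Some j \<longrightarrow> j < length ps" using o \<open>length ps = n\<close> by (auto simp: On_def)
    ultimately have "hforest qs" unfolding qs hforest_snoc by blast
    thus "qs \<in> Hn (Suc n)" using qs \<open>length ps = n\<close> by (simp add: Hn_def)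
  qed
qed

lemma finite_Hn: "finite (Hn n)"
proof (induct n)
  case 0
  have "Hn 0 = {[]}" by (auto simp: Hn_def hforest_def)
  thus ?case by simp
next
  case (Suc n)
  have "finite (On n)" by (simp add: On_def)
  thus ?case unfolding Hn_Suc using Suc by simp
qed

lemma card_Hn: "card (Hn n) = fact n"
proof (induct n)
  case 0
  have "Hn 0 = {[]}" by (auto simp: Hn_def hforest_def)
  thus ?case by simp
next
  case (Suc n)
  have inj: "inj_on (\<lambda>(ps, oo). ps @ [oo]) (Hn n \<times> On n)" by (rule inj_onI) auto
  have "card (On n) = Suc n" unfolding On_def by (simp add: card_image)
  thus ?case unfolding Hn_Suc card_image[OF inj] card_cartesian_product Suc by simp
qed

lemma card_Perm: "card (Perm n) = fact n"
proof -
  have "Perm n = {xs. length xs = card {0..<n} \<and> distinct xs \<and> set xs \<subseteq> {0..<n}}"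
  proof (rule set_eqI, rule iffI)
    fix xs assume "xs \<in> Perm n"
    thus "xs \<in> {xs. length xs = card {0..<n} \<and> distinct xs \<and> set xs \<subseteq> {0..<n}}"
      using Perm_length[of xs n] by (simp add: Perm_def)
  next
    fix xs assume a: "xs \<in> {xs. length xs = card {0..<n} \<and> distinct xs \<and> set xs \<subseteq> {0..<n}}"
    hence "card (set xs) = card {0..<n}" using distinct_card[of xs] by simp
    hence "set xs = {0..<n}" using a card_subset_eq[of "{0..<n}" "set xs"] by simp
    thus "xs \<in> Perm n" using a by (simp add: Perm_def)
  qed
  hence "card (Perm n) = \<Prod>{card {0..<n} - card {0..<n} + 1 .. card {0..<n}}"
    using card_lists_distinct_length_eq[of "{0..<n}" "card {0..<n}"] by simp
  thus ?thesis by (simp add: fact_prod)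
qed

lemma finite_Perm: "finite (Perm n)"
  using card_Perm[of n] card.infinite by fastforce

lemma psi_image: "psi ` Perm n = Hn n"
proof -
  have sub: "psi ` Perm n \<subseteq> Hn n" using psi_hforest Perm_length by (auto simp: Hn_def)
  have "card (psi ` Perm n) = card (Hn n)"
    using card_image[OF psi_inj] card_Perm card_Hn by simp
  thus ?thesis using card_subset_eq[OF finite_Hn sub] by simp
qed

lemma psi_surj:
  assumes "heap_ordered ps"
  shows "\<exists>w\<in>Perm (length ps). psi w = ps"
proof -
  have "ps \<in> Hn (length ps)" using assms by (simp add: Hn_def heap_ordered_iff)
  hence "ps \<in> psi ` Perm (length ps)" using psi_image by simp
  thus ?thesis by blast
qed


lemma lin_ext_sum:
  fixes c :: "'i \<Rightarrow> 'k::comm_semiring_0"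
  assumes "finite I" "\<And>i. i \<in> I \<Longrightarrow> finite (supp (y i))"
  shows "lin_ext f (\<lambda>a. \<Sum>i\<in>I. c i * y i a) b = (\<Sum>i\<in>I. c i * lin_ext f (y i) b)"
proof -
  let ?A = "\<Union>i\<in>I. supp (y i)"
  have fA: "finite ?A" using assms by auto
  have s: "supp (\<lambda>a. \<Sum>i\<in>I. c i * y i a) \<subseteq> ?A"
  proof
    fix a assume "a \<in> supp (\<lambda>a. \<Sum>i\<in>I. c i * y i a)"
    hence "(\<Sum>i\<in>I. c i * y i a) \<noteq> 0" by (simp add: supp_def)
    then obtain i where "i \<in> I" "c i * y i a \<noteq> 0" using sum.neutral by (metis (mono_tags, lifting))
    moreover hence "y i a \<noteq> 0" by auto
    ultimately show "a \<in> ?A" by (auto simp: supp_def)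
  qed
  have "lin_ext f (\<lambda>a. \<Sum>i\<in>I. c i * y i a) b = (\<Sum>a\<in>?A. (\<Sum>i\<in>I. c i * y i a) * f a b)"
    by (rule lin_ext_superset[OF fA s])
  also have "\<dots> = (\<Sum>i\<in>I. \<Sum>a\<in>?A. c i * y i a * f a b)"
    by (simp add: sum_distrib_right) (rule sum.swap)
  also have "\<dots> = (\<Sum>i\<in>I. c i * lin_ext f (y i) b)"
  proof (rule sum.cong[OF refl])
    fix i assume i: "i \<in> I"
    have "lin_ext f (y i) b = (\<Sum>a\<in>?A. y i a * f a b)"
      by (rule lin_ext_superset[OF fA]) (use i in auto)
    thus "(\<Sum>a\<in>?A. c i * y i a * f a b) = c i * lin_ext f (y i) b"
      by (simp add: sum_distrib_left mult.assoc)
  qed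
  finally show ?thesis .
qed

lemma fvec_sum:
  fixes c :: "'i \<Rightarrow> 'k::comm_semiring_0"
  assumes "finite I" "\<And>i. i \<in> I \<Longrightarrow> y i \<in> fvec B"
  shows "(\<lambda>a. \<Sum>i\<in>I. c i * y i a) \<in> fvec B"
proof -
  let ?A = "\<Union>i\<in>I. supp (y i)"
  have fA: "finite ?A" using assms by (auto simp: fvec_def)
  have AB: "?A \<subseteq> B" using assms by (auto simp: fvec_def)
  have s: "supp (\<lambda>a. \<Sum>i\<in>I. c i * y i a) \<subseteq> ?A"
  proof
    fix a assume "a \<in> supp (\<lambda>a. \<Sum>i\<in>I. c i * y i a)"
    hence "(\<Sum>i\<in>I. c i * y i a) \<noteq> 0" by (simp add: supp_def)
    then obtain i where "i \<in> I" "c i * y i a \<noteq> 0" using sum.neutral by (metis (mono_tags, lifting))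
    moreover hence "y i a \<noteq> 0" by auto
    ultimately show "a \<in> ?A" by (auto simp: supp_def)
  qed
  show ?thesis unfolding fvec_def using s fA AB finite_subset by blast
qed

lemma fvec_lin: fixes c :: "'k::semiring_0" shows "x \<in> fvec B \<Longrightarrow> y \<in> fvec B \<Longrightarrow> (\<lambda>a. c * x a + y a) \<in> fvec B"
proof -
  assume x: "x \<in> fvec B" and y: "y \<in> fvec B"
  have "supp (\<lambda>a. c * x a + y a) \<subseteq> supp x \<union> supp y" by (auto simp: supp_def)
  thus ?thesis using x y unfolding fvec_def by (auto intro: finite_subset)
qed

lemma bvec_fvec: "b \<in> B \<Longrightarrow> (bvec b :: 'b \<Rightarrow> 'k::zero_neq_one) \<in> fvec B"
  by (simp add: fvec_def supp_bvec)

lemma Theta_into: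
  assumes "x \<in> fvec (HF d)"
  shows "Theta (x :: dforest \<Rightarrow> 'k::field) \<in> fvec (DP d)"
proof -
  have f: "finite (supp x)" using assms by (simp add: fvec_def)
  have "supp (Theta x) \<subseteq> DP d"
  proof
    fix p assume "p \<in> supp (Theta x)"
    hence "(\<Sum>F\<in>supp x. x F * theta_basis F p) \<noteq> 0"
      using f by (simp add: supp_def Theta_eval)
    then obtain F where F: "F \<in> supp x" "theta_basis F p \<noteq> (0::'k)"
      by (metis (mono_tags, lifting) mult_zero_right sum.neutral)
    hence w: "fst p \<in> S_F (fst F)" and l: "snd p = snd F" by (auto simp: theta_basis_val split: if_splits)
    have "F \<in> HF d" using F(1) assms by (auto simp: fvec_def)
    thus "p \<in> DP d" using w l S_F_length[OF w]
      by (cases p, cases F) (auto simp: DP_def HF_def S_F_def)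
  qed
  thus ?thesis using finite_supp_Theta[OF f] by (simp add: fvec_def)
qed

lemma lx_max:
  assumes "finite A" "A \<noteq> {}"
  shows "\<exists>a\<in>A. \<forall>b\<in>A. \<not> lx (f a) (f b)"
  using assms
proof (induct rule: finite_ne_induct)
  case (singleton x) thus ?case by (simp add: lexordp_irreflexive')
next
  case (insert x A)
  then obtain m where m: "m \<in> A" "\<forall>b\<in>A. \<not> lx (f m) (f b)" by blast
  show ?case
  proof (cases "lx (f m) (f x)")
    case True
    have "\<forall>b\<in>insert x A. \<not> lx (f x) (f b)"
    proof
      fix b assume "b \<in> insert x A"
      thus "\<not> lx (f x) (f b)"
      proof
        assume "b = x" thus ?thesis by (simp add: lexordp_irreflexive')
      next
        assume b: "b \<in> A"
        show ?thesis
        proof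
          assume "lx (f x) (f b)"
          hence "lx (f m) (f b)" using True lexordp_trans by blast
          thus False using m b by blast
        qed
      qed
    qed
    thus ?thesis by blast
  next
    case False thus ?thesis using m by blast
  qed
qed

definition key :: "nat option list \<Rightarrow> nat list" where
  "key ps = (SOME w. w \<in> Perm (length ps) \<and> psi w = ps)"

lemma key_prop: "heap_ordered ps \<Longrightarrow> key ps \<in> Perm (length ps) \<and> psi (key ps) = ps"
proof -
  assume "heap_ordered ps"
  hence "\<exists>w. w \<in> Perm (length ps) \<and> psi w = ps" using psi_surj by blast
  thus ?thesis unfolding key_def by (rule someI_ex)
qed

lemma Theta_zero:
  assumes x: "x \<in> fvec (HF d)" and z: "Theta (x :: dforest \<Rightarrow> 'k::field) = (\<lambda>_. 0)"
  shows "x = (\<lambda>_. 0)"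
proof (rule ccontr)
  assume "x \<noteq> (\<lambda>_. 0)"
  hence ne: "supp x \<noteq> {}" by (auto simp: supp_def)
  have f: "finite (supp x)" using x by (simp add: fvec_def)
  have HF: "\<And>F. F \<in> supp x \<Longrightarrow> heap_ordered (fst F)" using x by (auto simp: fvec_def HF_def)
  obtain F0 where F0: "F0 \<in> supp x" "\<forall>G\<in>supp x. \<not> lx (key (fst F0)) (key (fst G))"
    using lx_max[OF f ne, of "\<lambda>F. key (fst F)"] by blast
  define v where "v = key (fst F0)"
  have v: "v \<in> Perm (length (fst F0))" "psi v = fst F0" using key_prop[OF HF[OF F0(1)]] by (auto simp: v_def)
  have "Theta x (v, snd F0) = (\<Sum>G\<in>supp x. x G * theta_basis G (v, snd F0))"
    by (rule Theta_eval[OF f])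
  also have "\<dots> = (\<Sum>G\<in>supp x. if G = F0 then x G else 0)"
  proof (rule sum.cong[OF refl])
    fix G assume G: "G \<in> supp x"
    show "x G * theta_basis G (v, snd F0) = (if G = F0 then x G else 0)"
    proof (cases "G = F0")
      case True
      have "v \<in> S_F (fst F0)" using psi_in_S_F[OF v(1)] v(2) by simp
      thus ?thesis using True by (simp add: theta_basis_val)
    next
      case False
      have "theta_basis G (v, snd F0) = (0::'k)"
      proof (rule ccontr)
        assume "theta_basis G (v, snd F0) \<noteq> (0::'k)"
        hence vS: "v \<in> S_F (fst G)" and l: "snd F0 = snd G" by (auto simp: theta_basis_val split: if_splits)
        have kG: "key (fst G) \<in> Perm (length (fst G))" "psi (key (fst G)) = fst G"
          using key_prop[OF HF[OF G]] by auto
        have "v = key (fst G) \<or> lx v (key (fst G))" using psi_max[OF kG(1)] vS kG(2) by simp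
        hence "v = key (fst G)" using F0(2) G by (auto simp: v_def)
        hence "fst G = fst F0" using kG(2) v(2) by simp
        hence "G = F0" using l by (cases G, cases F0) auto
        thus False using False by simp
      qed
      thus ?thesis using False by simp
    qed
  qed
  also have "\<dots> = x F0" using f F0(1) by (simp add: sum.delta')
  finally have "Theta x (v, snd F0) = x F0" .
  moreover have "x F0 \<noteq> 0" using F0(1) by (simp add: supp_def)
  ultimately show False using z by simp
qed

lemma Theta_inj: "inj_on (Theta :: (dforest \<Rightarrow> 'k::field) \<Rightarrow> dperm \<Rightarrow> 'k) (fvec (HF d))"
proof (rule inj_onI)
  fix x y :: "dforest \<Rightarrow> 'k" assume x: "x \<in> fvec (HF d)" and y: "y \<in> fvec (HF d)" and e: "Theta x = Theta y"
  let ?z = "\<lambda>F. (-1) * y F + x F"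
  have zf: "?z \<in> fvec (HF d)" by (rule fvec_lin[OF y x])
  have "Theta ?z = (\<lambda>p. (-1) * Theta y p + Theta x p)"
    by (rule Theta_linear) (use x y in \<open>auto simp: fvec_def\<close>)
  also have "\<dots> = (\<lambda>_. 0)" using e by simp
  finally have "?z = (\<lambda>_. 0)" using Theta_zero[OF zf] by blast
  hence zz: "?z = (\<lambda>_. 0)" .
  show "x = y"
  proof (rule ext)
    fix F
    have h: "(-1) * y F + x F = 0" using fun_cong[OF zz, of F] by (simp only:)
    have "x F = ((-1) * y F + x F) + y F" by simp
    also have "\<dots> = y F" using h by simp
    finally show "x F = y F" .
  qed
qed

lemma Theta_sum:
  fixes c :: "'i \<Rightarrow> 'k::field"
  assumes "finite I" "\<And>i. i \<in> I \<Longrightarrow> finite (supp (y i))"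
  shows "Theta (\<lambda>a. \<Sum>i\<in>I. c i * y i a) = (\<lambda>p. \<Sum>i\<in>I. c i * Theta (y i) p)"
  unfolding Theta_def by (rule ext, rule lin_ext_sum[OF assms])

lemma Theta_bvec: "Theta (bvec F :: dforest \<Rightarrow> 'k::field) = theta_basis F"
  unfolding Theta_def by (rule lin_ext_bvec)

lemma surj_basis:
  fixes l :: "nat list"
  assumes "\<forall>x\<in>set l. 1 \<le> x \<and> x \<le> d"
  shows "w \<in> Perm (length l) \<Longrightarrow> \<exists>x\<in>fvec (HF d). Theta x = (bvec (w, l) :: dperm \<Rightarrow> 'k::field)"
proof (induct "card {u \<in> Perm (length l). lx u w}" arbitrary: w rule: less_induct)
  case less
  let ?n = "length l"
  have w: "w \<in> Perm ?n" by fact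
  define R where "R = S_F (psi w) - {w}"
  have wS: "w \<in> S_F (psi w)" using psi_in_S_F[OF w] .
  have fR: "finite R" using finite_S_F by (simp add: R_def)
  have IHapp: "\<And>u. u \<in> R \<Longrightarrow> \<exists>x\<in>fvec (HF d). Theta x = (bvec (u, l) :: dperm \<Rightarrow> 'k)"
  proof -
    fix u assume u: "u \<in> R"
    have uS: "u \<in> S_F (psi w)" "u \<noteq> w" using u by (auto simp: R_def)
    have luw: "lx u w" using psi_max[OF w uS(1)] uS(2) by simp
    have uP: "u \<in> Perm ?n" using S_F_Perm[OF uS(1)] Perm_length[OF w] by simp
    have sub: "{u' \<in> Perm ?n. lx u' u} \<subseteq> {u' \<in> Perm ?n. lx u' w}"
      using luw lexordp_trans by blast
    have "u \<in> {u' \<in> Perm ?n. lx u' w}" "u \<notin> {u' \<in> Perm ?n. lx u' u}"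
      using uP luw by (auto simp: lexordp_irreflexive')
    hence "card {u' \<in> Perm ?n. lx u' u} < card {u' \<in> Perm ?n. lx u' w}"
      using sub finite_Perm by (intro psubset_card_mono) auto
    thus "\<exists>x\<in>fvec (HF d). Theta x = (bvec (u, l) :: dperm \<Rightarrow> 'k)" using less(1) uP by blast
  qed
  then obtain xs where xs: "\<And>u. u \<in> R \<Longrightarrow> xs u \<in> fvec (HF d) \<and> Theta (xs u) = (bvec (u, l) :: dperm \<Rightarrow> 'k)"
    by metis
  have Fh: "(psi w, l) \<in> HF d"
    using assms psi_hforest Perm_length[OF w] by (simp add: HF_def heap_ordered_iff)
  let ?y = "\<lambda>F. \<Sum>u\<in>R. (-1) * xs u F"
  let ?x = "\<lambda>F. 1 * bvec (psi w, l) F + ?y F"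
  have yf: "?y \<in> fvec (HF d)" by (rule fvec_sum[OF fR]) (use xs in auto)
  have xf: "?x \<in> fvec (HF d)" by (rule fvec_lin[OF bvec_fvec[OF Fh] yf])
  have "Theta ?x = (\<lambda>p. 1 * Theta (bvec (psi w, l)) p + Theta ?y p)"
    by (rule Theta_linear) (use yf in \<open>auto simp: fvec_def supp_bvec\<close>)
  also have "\<dots> = (\<lambda>p. theta_basis (psi w, l) p + (\<Sum>u\<in>R. (-1) * bvec (u, l) p))"
  proof -
    have "Theta ?y = (\<lambda>p. \<Sum>u\<in>R. (-1) * Theta (xs u) p)"
      by (rule Theta_sum[OF fR]) (use xs in \<open>auto simp: fvec_def\<close>)
    also have "\<dots> = (\<lambda>p. \<Sum>u\<in>R. (-1) * bvec (u, l) p)" using xs by simp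
    finally show ?thesis by (simp add: Theta_bvec)
  qed
  also have "\<dots> = bvec (w, l)"
  proof (rule ext)
    fix p
    have SR: "S_F (psi w) = insert w R" using wS by (auto simp: R_def)
    have "theta_basis (psi w, l) p = (\<Sum>u\<in>insert w R. if (u, l) = p then (1::'k) else 0)"
      by (simp only: theta_basis_def fst_conv snd_conv SR)
    also have "\<dots> = (if (w, l) = p then 1 else 0) + (\<Sum>u\<in>R. if (u, l) = p then 1 else 0)"
      using fR by (subst sum.insert) (auto simp: R_def)
    finally have t: "theta_basis (psi w, l) p = (if (w, l) = p then 1 else 0) + (\<Sum>u\<in>R. if (u, l) = p then (1::'k) else 0)" .
    have n: "(\<Sum>u\<in>R. (-1) * bvec (u, l) p) = - (\<Sum>u\<in>R. if (u, l) = p then (1::'k) else 0)"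
      by (subst sum_negf[symmetric]) (intro sum.cong refl, auto simp: bvec_def)
    show "theta_basis (psi w, l) p + (\<Sum>u\<in>R. (-1) * bvec (u, l) p) = (bvec (w, l) p :: 'k)"
    proof -
      have "theta_basis (psi w, l) p + (\<Sum>u\<in>R. (-1) * bvec (u, l) p) = (if (w, l) = p then (1::'k) else 0)"
        using t n by simp
      also have "\<dots> = bvec (w, l) p" by (auto simp: bvec_def)
      finally show ?thesis .
    qed
  qed
  finally show ?case using xf by blast
qed

lemma Theta_surj:
  assumes z: "z \<in> fvec (DP d)"
  shows "\<exists>x\<in>fvec (HF d). Theta x = (z :: dperm \<Rightarrow> 'k::field)"
proof -
  have f: "finite (supp z)" and sD: "supp z \<subseteq> DP d" using z by (auto simp: fvec_def)
  have "\<And>q. q \<in> supp z \<Longrightarrow> \<exists>x\<in>fvec (HF d). Theta x = (bvec q :: dperm \<Rightarrow> 'k)"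
  proof -
    fix q assume "q \<in> supp z"
    hence q: "q \<in> DP d" using sD by blast
    obtain w l where wl: "q = (w, l)" by (cases q)
    have "w \<in> Perm (length l)" "\<forall>x\<in>set l. 1 \<le> x \<and> x \<le> d" using q wl by (auto simp: DP_def Perm_def)
    thus "\<exists>x\<in>fvec (HF d). Theta x = (bvec q :: dperm \<Rightarrow> 'k)" using surj_basis wl by blast
  qed
  then obtain xs where xs: "\<And>q. q \<in> supp z \<Longrightarrow> xs q \<in> fvec (HF d) \<and> Theta (xs q) = (bvec q :: dperm \<Rightarrow> 'k)"
    by metis
  let ?x = "\<lambda>F. \<Sum>q\<in>supp z. z q * xs q F"
  have "?x \<in> fvec (HF d)" by (rule fvec_sum[OF f]) (use xs in auto)
  moreover have "Theta ?x = z"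
  proof -
    have "Theta ?x = (\<lambda>p. \<Sum>q\<in>supp z. z q * Theta (xs q) p)"
      by (rule Theta_sum[OF f]) (use xs in \<open>auto simp: fvec_def\<close>)
    also have "\<dots> = (\<lambda>p. \<Sum>q\<in>supp z. z q * bvec q p)" using xs by simp
    also have "\<dots> = z"
    proof (rule ext)
      fix p
      have "(\<Sum>q\<in>supp z. z q * bvec q p) = (\<Sum>q\<in>supp z. if q = p then z q else 0)"
        by (intro sum.cong refl) (simp add: bvec_def eq_commute)
      also have "\<dots> = z p" using f by (simp add: sum.delta') (simp add: supp_def)
      finally show "(\<Sum>q\<in>supp z. z q * bvec q p) = z p" .
    qed
    finally show ?thesis .
  qed
  ultimately show ?thesis by blast
qed

lemma Theta_bij: "bij_betw (Theta :: (dforest \<Rightarrow> 'k::field) \<Rightarrow> dperm \<Rightarrow> 'k) (fvec (HF d)) (fvec (DP d))"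
  unfolding bij_betw_def
proof
  show "inj_on (Theta :: (dforest \<Rightarrow> 'k::field) \<Rightarrow> dperm \<Rightarrow> 'k) (fvec (HF d))" by (rule Theta_inj)
  show "Theta ` fvec (HF d) = (fvec (DP d) :: (dperm \<Rightarrow> 'k) set)"
    using Theta_into Theta_surj by blast
qed


definition before :: "nat list \<Rightarrow> nat \<Rightarrow> nat \<Rightarrow> bool" where
  "before w a b = (\<exists>xs ys. w = xs @ b # ys \<and> a \<in> set xs)"

lemma before_pos:
  assumes "distinct w"
  shows "before w a b \<longleftrightarrow> a \<in> set w \<and> b \<in> set w \<and> pos w a < pos w b"
proof
  assume "before w a b"
  then obtain xs ys where w: "w = xs @ b # ys" and a: "a \<in> set xs" by (auto simp: before_def)
  have pb: "pos w b = length xs" using pos_nth[OF assms, of "length xs"] w by simp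
  obtain i where i: "i < length xs" "xs ! i = a" using a by (auto simp: in_set_conv_nth)
  have pa: "pos w a = i" using pos_nth[OF assms, of i] w i by (simp add: nth_append)
  show "a \<in> set w \<and> b \<in> set w \<and> pos w a < pos w b" using w a pa pb i by auto
next
  assume h: "a \<in> set w \<and> b \<in> set w \<and> pos w a < pos w b"
  define q where "q = pos w b"
  have q: "q < length w" "w ! q = b" using pos_prop[OF assms] h by (auto simp: q_def)
  have w: "w = take q w @ b # drop (Suc q) w" using q by (metis id_take_nth_drop)
  have pa: "pos w a < length w" "w ! pos w a = a" using pos_prop[OF assms] h by auto
  have lt: "pos w a < q" using h by (simp add: q_def)
  have "take q w ! pos w a = a" using lt pa by simp
  moreover have "pos w a < length (take q w)" using lt q by simp
  ultimately have "a \<in> set (take q w)" by (metis nth_mem)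
  thus "before w a b" unfolding before_def using w by blast
qed

lemma before_nth: "distinct w \<Longrightarrow> p < q \<Longrightarrow> q < length w \<Longrightarrow> before w (w ! p) (w ! q)"
  by (simp add: before_pos pos_nth)

lemma before_filter_I: "before w a b \<Longrightarrow> P a \<Longrightarrow> P b \<Longrightarrow> before (filter P w) a b"
proof -
  assume "before w a b" "P a" "P b"
  then obtain xs ys where "w = xs @ b # ys" "a \<in> set xs" by (auto simp: before_def)
  hence "filter P w = filter P xs @ b # filter P ys" "a \<in> set (filter P xs)" using \<open>P a\<close> \<open>P b\<close> by auto
  thus ?thesis unfolding before_def by blast
qed

lemma before_filter_D: "before (filter P w) a b \<Longrightarrow> before w a b"
proof (induct w)
  case Nil thus ?case by (simp add: before_def)
next
  case (Cons c w)
  show ?case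
  proof (cases "P c")
    case False
    hence "before (filter P w) a b" using Cons(2) by simp
    hence "before w a b" by (rule Cons(1))
    then obtain xs ys where "w = xs @ b # ys" "a \<in> set xs" by (auto simp: before_def)
    thus ?thesis unfolding before_def by (intro exI[of _ "c # xs"] exI[of _ ys]) auto
  next
    case True
    from Cons(2) True obtain xs ys where e: "c # filter P w = xs @ b # ys" and a: "a \<in> set xs"
      by (auto simp: before_def)
    then obtain xs' where xs: "xs = c # xs'" by (cases xs) auto
    have e': "filter P w = xs' @ b # ys" using e xs by simp
    show ?thesis
    proof (cases "a = c")
      case True
      have "b \<in> set (filter P w)" using e' by simp
      hence "b \<in> set w" by simp
      then obtain s t where "w = s @ b # t" by (meson split_list)
      thus ?thesis unfolding before_def using True by (intro exI[of _ "c # s"] exI[of _ t]) auto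
    next
      case False
      hence "a \<in> set xs'" using a xs by simp
      hence "before (filter P w) a b" using e' by (auto simp: before_def)
      hence "before w a b" by (rule Cons(1))
      then obtain s t where "w = s @ b # t" "a \<in> set s" by (auto simp: before_def)
      thus ?thesis unfolding before_def by (intro exI[of _ "c # s"] exI[of _ t]) auto
    qed
  qed
qed

lemma before_filter: "P a \<Longrightarrow> P b \<Longrightarrow> before (filter P w) a b \<longleftrightarrow> before w a b"
  using before_filter_I before_filter_D by blast

lemma before_map_I: "before w a b \<Longrightarrow> before (map f w) (f a) (f b)"
proof -
  assume "before w a b"
  then obtain xs ys where "w = xs @ b # ys" "a \<in> set xs" by (auto simp: before_def)
  hence "map f w = map f xs @ f b # map f ys" "f a \<in> set (map f xs)" by auto
  thus ?thesis unfolding before_def by blast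
qed

lemma before_map_D:
  assumes "before (map f w) (f a) (f b)" "inj_on f (set w)" "a \<in> set w" "b \<in> set w"
  shows "before w a b"
proof -
  obtain xs ys where e: "map f w = xs @ f b # ys" and a: "f a \<in> set xs"
    using assms(1) by (auto simp: before_def)
  then obtain w1 w2 where w: "w = w1 @ w2" "map f w1 = xs" "map f w2 = f b # ys"
    by (auto simp: map_eq_append_conv)
  then obtain b' w2' where w2: "w2 = b' # w2'" "f b' = f b" by (cases w2) auto
  have "b' = b" using assms(2,4) w w2 by (auto simp: inj_on_def)
  obtain a' where a': "a' \<in> set w1" "f a' = f a" using a w(2) by auto
  have "a' = a" using assms(2,3) w a' by (auto simp: inj_on_def)
  thus ?thesis unfolding before_def using w w2 \<open>b' = b\<close> a' by blast
qed


lemma before_Cons_D: "before (x # xs) a b \<Longrightarrow> a \<noteq> x \<Longrightarrow> before xs a b"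
proof -
  assume "before (x # xs) a b" "a \<noteq> x"
  then obtain s t where e: "x # xs = s @ b # t" and a: "a \<in> set s" by (auto simp: before_def)
  then obtain s' where s: "s = x # s'" by (cases s) auto
  hence "xs = s' @ b # t" "a \<in> set s'" using e a \<open>a \<noteq> x\<close> by auto
  thus ?thesis unfolding before_def by blast
qed

lemma before_Cons_head: "b \<in> set xs \<Longrightarrow> before (x # xs) x b"
proof -
  assume "b \<in> set xs"
  then obtain s t where "xs = s @ b # t" by (meson split_list)
  hence "x # xs = (x # s) @ b # t" "x \<in> set (x # s)" by auto
  thus ?thesis unfolding before_def by blast
qed

lemma before_not_head: "before (x # xs) a x \<Longrightarrow> x \<in> set xs"
proof -
  assume "before (x # xs) a x"
  then obtain s t where e: "x # xs = s @ x # t" and a: "a \<in> set s" by (auto simp: before_def)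
  then obtain y s' where s: "s = y # s'" by (cases s) auto
  hence "xs = s' @ x # t" using e by simp
  thus ?thesis by simp
qed

lemma eq_by_before:
  "distinct xs \<Longrightarrow> distinct ys \<Longrightarrow> set xs = set ys \<Longrightarrow> (\<forall>a b. before xs a b \<longrightarrow> before ys a b) \<Longrightarrow> xs = ys"
proof (induct xs arbitrary: ys)
  case Nil thus ?case by simp
next
  case (Cons x xs)
  obtain y ys' where ys: "ys = y # ys'" using Cons(4) by (cases ys) auto
  have "y = x"
  proof (rule ccontr)
    assume "y \<noteq> x"
    hence "y \<in> set xs" using Cons(4) ys by auto
    hence "before (x # xs) x y" by (rule before_Cons_head)
    hence "before ys x y" using Cons(5) by blast
    hence "y \<in> set ys'" using ys before_not_head by blast
    thus False using Cons(3) ys by simp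
  qed
  have "xs = ys'"
  proof (rule Cons(1))
    show "distinct xs" using Cons(2) by simp
    show "distinct ys'" using Cons(3) ys by simp
    show "set xs = set ys'" using Cons(2,3,4) ys \<open>y = x\<close> by auto
    show "\<forall>a b. before xs a b \<longrightarrow> before ys' a b"
    proof (intro allI impI)
      fix a b assume "before xs a b"
      have b1: "before (x # xs) a b"
      proof -
        obtain s t where "xs = s @ b # t" "a \<in> set s" using \<open>before xs a b\<close> by (auto simp: before_def)
        hence "x # xs = (x # s) @ b # t" "a \<in> set (x # s)" by auto
        thus ?thesis unfolding before_def by blast
      qed
      hence "before ys a b" using Cons(5) by blast
      moreover have "a \<noteq> x" using \<open>before xs a b\<close> Cons(2) by (auto simp: before_def)
      ultimately show "before ys' a b" using ys \<open>y = x\<close> before_Cons_D by blast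
    qed
  qed
  thus ?case using ys \<open>y = x\<close> by simp
qed

lemma SF_before:
  assumes "hforest ps"
  shows "w \<in> S_F ps \<longleftrightarrow> distinct w \<and> set w = {0..<length ps} \<and> (\<forall>i j. f_reach ps i j \<longrightarrow> before w j i)"
proof
  assume w: "w \<in> S_F ps"
  hence d: "distinct w" and s: "set w = {0..<length ps}" and c: "\<forall>p<length w. \<forall>q<length w. f_reach ps (w ! p) (w ! q) \<longrightarrow> p > q"
    by (auto simp: S_F_def)
  have "\<forall>i j. f_reach ps i j \<longrightarrow> before w j i"
  proof (intro allI impI)
    fix i j assume r: "f_reach ps i j"
    have i: "i \<in> set w" using f_reach_src[OF r] s by simp
    have j: "j \<in> set w" using f_reach_src[OF r] f_reach_dec[OF assms r] s by simp
    have pi: "pos w i < length w" "w ! pos w i = i" using pos_prop[OF d i] by auto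
    have pj: "pos w j < length w" "w ! pos w j = j" using pos_prop[OF d j] by auto
    have "f_reach ps (w ! pos w i) (w ! pos w j)" using pi pj r by simp
    hence "pos w i > pos w j" using c pi(1) pj(1) by blast
    thus "before w j i" using before_pos[OF d] i j by simp
  qed
  thus "distinct w \<and> set w = {0..<length ps} \<and> (\<forall>i j. f_reach ps i j \<longrightarrow> before w j i)" using d s by simp
next
  assume h: "distinct w \<and> set w = {0..<length ps} \<and> (\<forall>i j. f_reach ps i j \<longrightarrow> before w j i)"
  show "w \<in> S_F ps" unfolding S_F_def
  proof (intro CollectI conjI allI impI)
    show "distinct w" "set w = {0..<length ps}" using h by auto
    fix p q assume pq: "p < length w" "q < length w" "f_reach ps (w ! p) (w ! q)"
    hence "before w (w ! q) (w ! p)" using h by blast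
    hence "pos w (w ! q) < pos w (w ! p)" using before_pos[of w] h by simp
    thus "q < p" using pos_nth[of w] h pq by simp
  qed
qed

lemma Sh_before:
  "e \<in> Sh k k2 \<longleftrightarrow> distinct e \<and> set e = {0..<k+k2} \<and> (\<forall>a b. a < b \<and> b < k \<longrightarrow> before e a b)
     \<and> (\<forall>a b. k \<le> a \<and> a < b \<and> b < k + k2 \<longrightarrow> before e a b)"
proof
  assume e: "e \<in> Sh k k2"
  have E: "distinct e \<and> set e = {0..<k+k2} \<and> (\<forall>i<length e. \<forall>j<length e.
        ((e ! i < e ! j \<and> e ! j < k) \<or> (k \<le> e ! i \<and> e ! i < e ! j \<and> e ! j < k + k2)) \<longrightarrow> i < j)"
    using e unfolding Sh_def mem_Collect_eq .
  have d: "distinct e" using E by (rule conjunct1)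
  have s: "set e = {0..<k+k2}" using E by blast
  have c: "\<forall>i<length e. \<forall>j<length e.
        ((e ! i < e ! j \<and> e ! j < k) \<or> (k \<le> e ! i \<and> e ! i < e ! j \<and> e ! j < k + k2)) \<longrightarrow> i < j"
    using E by blast
  have gen: "before e a b" if ab: "a < b" "b < k + k2" "b < k \<or> k \<le> a" for a b
  proof -
    have a: "a \<in> set e" and b: "b \<in> set e" using ab s by auto
    have pa: "pos e a < length e" "e ! pos e a = a" using pos_prop[OF d a] by auto
    have pb: "pos e b < length e" "e ! pos e b = b" using pos_prop[OF d b] by auto
    have cond: "(e ! pos e a < e ! pos e b \<and> e ! pos e b < k) \<or> (k \<le> e ! pos e a \<and> e ! pos e a < e ! pos e b \<and> e ! pos e b < k + k2)"
      unfolding pa(2) pb(2) using ab by linarith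
    have "pos e a < pos e b" using c pa(1) pb(1) cond by blast
    thus "before e a b" using before_pos[OF d] a b by simp
  qed
  show "distinct e \<and> set e = {0..<k+k2} \<and> (\<forall>a b. a < b \<and> b < k \<longrightarrow> before e a b)
     \<and> (\<forall>a b. k \<le> a \<and> a < b \<and> b < k + k2 \<longrightarrow> before e a b)"
  proof (intro conjI allI impI)
    show "distinct e" "set e = {0..<k+k2}" using d s by auto
    fix a b
    assume "a < b \<and> b < k" thus "before e a b" by (intro gen) auto
  next
    fix a b
    assume "k \<le> a \<and> a < b \<and> b < k + k2" thus "before e a b" by (intro gen) auto
  qed
next
  assume h: "distinct e \<and> set e = {0..<k+k2} \<and> (\<forall>a b. a < b \<and> b < k \<longrightarrow> before e a b)
     \<and> (\<forall>a b. k \<le> a \<and> a < b \<and> b < k + k2 \<longrightarrow> before e a b)"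
  have d: "distinct e" using h by (rule conjunct1)
  have h1: "\<forall>a b. a < b \<and> b < k \<longrightarrow> before e a b" using h by blast
  have h2: "\<forall>a b. k \<le> a \<and> a < b \<and> b < k + k2 \<longrightarrow> before e a b" using h by blast
  show "e \<in> Sh k k2" unfolding Sh_def mem_Collect_eq
  proof (intro conjI allI impI)
    show "distinct e" by (rule d)
    show "set e = {0..<k+k2}" using h by blast
    fix i j assume ij: "i < length e" "j < length e"
      "(e ! i < e ! j \<and> e ! j < k) \<or> (k \<le> e ! i \<and> e ! i < e ! j \<and> e ! j < k + k2)"
    have "before e (e ! i) (e ! j)" using ij(3) h1 h2 by blast
    hence "pos e (e ! i) < pos e (e ! j)" using before_pos[OF d] by simp
    thus "i < j" using pos_nth[OF d] ij by simp
  qed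
qed


definition shq :: "nat \<Rightarrow> nat option list \<Rightarrow> nat option list" where
  "shq k qs = map (map_option (\<lambda>j. j + k)) qs"

lemma hforest_concat:
  assumes "hforest ps" "hforest qs"
  shows "hforest (ps @ shq (length ps) qs)"
  unfolding hforest_def
proof (intro allI impI)
  fix i j assume i: "i < length (ps @ shq (length ps) qs)" "(ps @ shq (length ps) qs) ! i = Some j"
  show "j < i"
  proof (cases "i < length ps")
    case True thus ?thesis using i assms(1) by (simp add: nth_append hforest_def)
  next
    case False
    hence e: "map_option (\<lambda>j. j + length ps) (qs ! (i - length ps)) = Some j"
      and il: "i - length ps < length qs" using i by (auto simp: nth_append shq_def)
    then obtain j' where j': "qs ! (i - length ps) = Some j'" "j = j' + length ps" by auto
    have "j' < i - length ps" using assms(2) j'(1) il by (simp add: hforest_def)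
    thus ?thesis using j' False by simp
  qed
qed

lemma edges_concat:
  assumes "k = length ps"
  shows "f_edges (ps @ shq k qs) = f_edges ps \<union> (\<lambda>(i, j). (i + k, j + k)) ` f_edges qs"
proof (rule set_eqI)
  fix x :: "nat \<times> nat"
  obtain i j where x: "x = (i, j)" by (cases x)
  show "x \<in> f_edges (ps @ shq k qs) \<longleftrightarrow> x \<in> f_edges ps \<union> (\<lambda>(i, j). (i + k, j + k)) ` f_edges qs"
  proof
    assume "x \<in> f_edges (ps @ shq k qs)"
    hence i: "i < length ps + length qs" "(ps @ shq k qs) ! i = Some j" using x by (auto simp: f_edges_def shq_def)
    show "x \<in> f_edges ps \<union> (\<lambda>(i, j). (i + k, j + k)) ` f_edges qs"
    proof (cases "i < length ps")
      case True thus ?thesis using i x by (auto simp: f_edges_def nth_append)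
    next
      case False
      hence e: "map_option (\<lambda>j. j + k) (qs ! (i - k)) = Some j" "i - k < length qs"
        using i assms by (auto simp: nth_append shq_def)
      then obtain j' where j': "qs ! (i - k) = Some j'" "j = j' + k" by auto
      have "(i - k, j') \<in> f_edges qs" using j' e by (simp add: f_edges_def)
      moreover have "x = (\<lambda>(i, j). (i + k, j + k)) (i - k, j')" using x j' False assms by simp
      ultimately show ?thesis by blast
    qed
  next
    assume "x \<in> f_edges ps \<union> (\<lambda>(i, j). (i + k, j + k)) ` f_edges qs"
    thus "x \<in> f_edges (ps @ shq k qs)"
    proof
      assume "x \<in> f_edges ps"
      thus ?thesis using x by (auto simp: f_edges_def nth_append)
    next
      assume "x \<in> (\<lambda>(i, j). (i + k, j + k)) ` f_edges qs"
      then obtain a b where ab: "(a, b) \<in> f_edges qs" "x = (a + k, b + k)" by auto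
      have "a < length qs" "qs ! a = Some b" using ab by (auto simp: f_edges_def)
      thus ?thesis using ab assms by (simp add: f_edges_def nth_append shq_def)
    qed
  qed
qed

lemma trancl_shift:
  "(x, y) \<in> ((\<lambda>(i, j). (i + k, j + (k::nat))) ` E)\<^sup>+ \<longleftrightarrow> k \<le> x \<and> k \<le> y \<and> (x - k, y - k) \<in> E\<^sup>+"
proof
  assume "(x, y) \<in> ((\<lambda>(i, j). (i + k, j + k)) ` E)\<^sup>+"
  thus "k \<le> x \<and> k \<le> y \<and> (x - k, y - k) \<in> E\<^sup>+"
  proof (induct rule: trancl_induct)
    case (base y) thus ?case by auto
  next
    case (step y z)
    then obtain a b where ab: "(a, b) \<in> E" "y = a + k" "z = b + k" by auto
    thus ?case using step(3) by (auto intro: trancl_into_trancl)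
  qed
next
  assume h: "k \<le> x \<and> k \<le> y \<and> (x - k, y - k) \<in> E\<^sup>+"
  have "\<And>a b. (a, b) \<in> E\<^sup>+ \<Longrightarrow> (a + k, b + k) \<in> ((\<lambda>(i, j). (i + k, j + k)) ` E)\<^sup>+"
  proof -
    fix a b assume "(a, b) \<in> E\<^sup>+"
    thus "(a + k, b + k) \<in> ((\<lambda>(i, j). (i + k, j + k)) ` E)\<^sup>+"
    proof (induct rule: trancl_induct)
      case (base y) thus ?case by (intro r_into_trancl) (auto intro: image_eqI[of _ _ "(a, y)"])
    next
      case (step y z)
      have "(y + k, z + k) \<in> (\<lambda>(i, j). (i + k, j + k)) ` E" using step(2) by (auto intro: image_eqI[of _ _ "(y, z)"])
      thus ?case by (rule trancl_into_trancl[OF step(3)])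
    qed
  qed
  from this[of "x - k" "y - k"] h show "(x, y) \<in> ((\<lambda>(i, j). (i + k, j + k)) ` E)\<^sup>+" by simp
qed

lemma trancl_union_sep:
  assumes A: "\<And>x y. (x, y) \<in> A \<Longrightarrow> x < (k::nat) \<and> y < k"
      and B: "\<And>x y. (x, y) \<in> B \<Longrightarrow> k \<le> x \<and> k \<le> y"
  shows "(A \<union> B)\<^sup>+ = A\<^sup>+ \<union> B\<^sup>+"
proof
  show "A\<^sup>+ \<union> B\<^sup>+ \<subseteq> (A \<union> B)\<^sup>+" by (meson Un_least Un_upper1 Un_upper2 trancl_mono subsetI)
  have At: "\<And>x y. (x, y) \<in> A\<^sup>+ \<Longrightarrow> y < k"
  proof -
    fix x y assume "(x, y) \<in> A\<^sup>+" thus "y < k" by (induct rule: trancl_induct) (auto dest: A)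
  qed
  have Bt: "\<And>x y. (x, y) \<in> B\<^sup>+ \<Longrightarrow> k \<le> y"
  proof -
    fix x y assume "(x, y) \<in> B\<^sup>+" thus "k \<le> y" by (induct rule: trancl_induct) (auto dest: B)
  qed
  show "(A \<union> B)\<^sup>+ \<subseteq> A\<^sup>+ \<union> B\<^sup>+"
  proof
    fix p assume "p \<in> (A \<union> B)\<^sup>+"
    then obtain x y where p: "p = (x, y)" "(x, y) \<in> (A \<union> B)\<^sup>+" by (cases p) auto
    from p(2) have "(x, y) \<in> A\<^sup>+ \<union> B\<^sup>+"
    proof (induct rule: trancl_induct)
      case (base y) thus ?case by auto
    next
      case (step y z)
      from step(2) show ?case
      proof
        assume yA: "(y, z) \<in> A"
        have "y < k" using A[OF yA] by simp
        hence "(x, y) \<notin> B\<^sup>+" using Bt by fastforce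
        hence "(x, y) \<in> A\<^sup>+" using step(3) by blast
        thus ?case using yA by (auto intro: trancl_into_trancl)
      next
        assume yB: "(y, z) \<in> B"
        have "k \<le> y" using B[OF yB] by simp
        hence "(x, y) \<notin> A\<^sup>+" using At by fastforce
        hence "(x, y) \<in> B\<^sup>+" using step(3) by blast
        thus ?case using yB by (auto intro: trancl_into_trancl)
      qed
    qed
    thus "p \<in> A\<^sup>+ \<union> B\<^sup>+" using p by simp
  qed
qed

lemma reach_concat:
  assumes "hforest ps" "k = length ps"
  shows "f_reach (ps @ shq k qs) i j \<longleftrightarrow> f_reach ps i j \<or> (k \<le> i \<and> k \<le> j \<and> f_reach qs (i - k) (j - k))"
proof -
  have A: "\<And>x y. (x, y) \<in> f_edges ps \<Longrightarrow> x < k \<and> y < k"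
  proof -
    fix x y assume "(x, y) \<in> f_edges ps"
    hence "x < length ps" "ps ! x = Some y" by (auto simp: f_edges_def)
    thus "x < k \<and> y < k" using assms by (auto simp: hforest_def)
  qed
  have B: "\<And>x y. (x, y) \<in> (\<lambda>(i, j). (i + k, j + k)) ` f_edges qs \<Longrightarrow> k \<le> x \<and> k \<le> y" by auto
  have U: "(f_edges ps \<union> (\<lambda>(i, j). (i + k, j + k)) ` f_edges qs)\<^sup>+ = (f_edges ps)\<^sup>+ \<union> ((\<lambda>(i, j). (i + k, j + k)) ` f_edges qs)\<^sup>+"
    by (rule trancl_union_sep[OF A B])
  show ?thesis unfolding f_reach_def edges_concat[OF assms(2)] U Un_iff trancl_shift ..
qed


definition zc :: "nat \<Rightarrow> nat list \<Rightarrow> nat list \<Rightarrow> nat list" where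
  "zc k u v = u @ map (\<lambda>x. x + k) v"

definition phi :: "nat \<Rightarrow> nat list \<Rightarrow> nat list \<Rightarrow> nat list \<Rightarrow> nat list" where
  "phi k u v e = map (\<lambda>i. zc k u v ! i) e"

lemma zc_perm:
  assumes "u \<in> Perm k" "v \<in> Perm k2"
  shows "zc k u v \<in> Perm (k + k2)"
proof -
  have d: "distinct u" "distinct v" and s: "set u = {0..<k}" "set v = {0..<k2}" using assms by (auto simp: Perm_def)
  have "distinct (map (\<lambda>x. x + k) v)" using d(2) by (simp add: distinct_map inj_on_def)
  moreover have "set (map (\<lambda>x. x + k) v) = {k..<k+k2}"
  proof -
    have "(\<lambda>x. x + k) ` {0..<k2} = {k..<k+k2}"
    proof (rule set_eqI, rule iffI)
      fix y assume "y \<in> {k..<k+k2}" thus "y \<in> (\<lambda>x. x + k) ` {0..<k2}" by (intro image_eqI[of _ _ "y - k"]) auto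
    qed auto
    thus ?thesis using s(2) by simp
  qed
  ultimately show ?thesis using d s unfolding Perm_def zc_def by auto
qed

lemma zc_lt: "u \<in> Perm k \<Longrightarrow> a < k \<Longrightarrow> zc k u v ! a = u ! a"
  using Perm_length by (simp add: zc_def nth_append)

lemma zc_ge: "u \<in> Perm k \<Longrightarrow> v \<in> Perm k2 \<Longrightarrow> k \<le> a \<Longrightarrow> a < k + k2 \<Longrightarrow> zc k u v ! a = v ! (a - k) + k"
  using Perm_length[of u k] Perm_length[of v k2] by (simp add: zc_def nth_append)

lemma map_nth_perm:
  assumes "z \<in> Perm n" "e \<in> Perm n"
  shows "map (\<lambda>i. z ! i) e \<in> Perm n"
proof -
  have d: "distinct z" "distinct e" and s: "set z = {0..<n}" "set e = {0..<n}" and l: "length z = n"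
    using assms Perm_length by (auto simp: Perm_def)
  have inj: "inj_on (\<lambda>i. z ! i) (set e)" using d(1) s l by (intro inj_on_nth) auto
  have "set (map (\<lambda>i. z ! i) e) = (\<lambda>i. z ! i) ` {0..<n}" using s by simp
  also have "\<dots> = set z" using l by (auto simp: set_conv_nth)
  finally show ?thesis using inj d s by (simp add: Perm_def distinct_map)
qed

lemma Sh_Perm: "e \<in> Sh k k2 \<Longrightarrow> e \<in> Perm (k + k2)"
  unfolding Sh_before Perm_def by blast

lemma phi_in:
  assumes hp: "hforest ps" and hq: "hforest qs" and k: "k = length ps" and k2: "k2 = length qs"
    and u: "u \<in> S_F ps" and v: "v \<in> S_F qs" and e: "e \<in> Sh k k2"
  shows "phi k u v e \<in> S_F (ps @ shq k qs)"
proof -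
  have uP: "u \<in> Perm k" using S_F_Perm[OF u] k by simp
  have vP: "v \<in> Perm k2" using S_F_Perm[OF v] k2 by simp
  have zP: "zc k u v \<in> Perm (k + k2)" by (rule zc_perm[OF uP vP])
  have eP: "e \<in> Perm (k + k2)" by (rule Sh_Perm[OF e])
  have wP: "phi k u v e \<in> Perm (k + k2)" unfolding phi_def by (rule map_nth_perm[OF zP eP])
  have hc: "hforest (ps @ shq k qs)" using hforest_concat[OF hp hq] k by simp
  have lc: "length (ps @ shq k qs) = k + k2" using k k2 by (simp add: shq_def)
  have uB: "\<forall>i j. f_reach ps i j \<longrightarrow> before u j i" using u SF_before[OF hp] by blast
  have vB: "\<forall>i j. f_reach qs i j \<longrightarrow> before v j i" using v SF_before[OF hq] by blast
  have eB1: "\<forall>a b. a < b \<and> b < k \<longrightarrow> before e a b" using e Sh_before by blast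
  have eB2: "\<forall>a b. k \<le> a \<and> a < b \<and> b < k + k2 \<longrightarrow> before e a b" using e Sh_before by blast
  have du: "distinct u" and su: "set u = {0..<k}" using uP by (auto simp: Perm_def)
  have dv: "distinct v" and sv: "set v = {0..<k2}" using vP by (auto simp: Perm_def)
  have lu: "length u = k" and lv: "length v = k2" using Perm_length uP vP by auto
  have R: "before (phi k u v e) j i" if r: "f_reach (ps @ shq k qs) i j" for i j
  proof -
    from r reach_concat[OF hp k] have "f_reach ps i j \<or> (k \<le> i \<and> k \<le> j \<and> f_reach qs (i - k) (j - k))" by blast
    thus ?thesis
    proof
      assume r1: "f_reach ps i j"
      have iu: "i \<in> set u" using f_reach_src[OF r1] su k by simp
      have ju: "j \<in> set u" using f_reach_src[OF r1] f_reach_dec[OF hp r1] su k by simp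
      have "before u j i" using uB r1 by blast
      hence pl: "pos u j < pos u i" using before_pos[OF du] by simp
      have pi: "pos u i < k" "u ! pos u i = i" using pos_prop[OF du iu] lu by auto
      have pj: "pos u j < k" "u ! pos u j = j" using pos_prop[OF du ju] lu by auto
      have "before e (pos u j) (pos u i)" using eB1 pl pi by blast
      hence "before (phi k u v e) (zc k u v ! pos u j) (zc k u v ! pos u i)"
        unfolding phi_def by (rule before_map_I)
      thus ?thesis using zc_lt[OF uP pi(1)] zc_lt[OF uP pj(1)] pi pj by simp
    next
      assume r2: "k \<le> i \<and> k \<le> j \<and> f_reach qs (i - k) (j - k)"
      hence r2': "f_reach qs (i - k) (j - k)" by simp
      have iv: "i - k \<in> set v" using f_reach_src[OF r2'] sv k2 by simp
      have jv: "j - k \<in> set v" using f_reach_src[OF r2'] f_reach_dec[OF hq r2'] sv k2 by simp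
      have "before v (j - k) (i - k)" using vB r2' by blast
      hence pl: "pos v (j - k) < pos v (i - k)" using before_pos[OF dv] by simp
      have pi: "pos v (i - k) < k2" "v ! pos v (i - k) = i - k" using pos_prop[OF dv iv] lv by auto
      have pj: "pos v (j - k) < k2" "v ! pos v (j - k) = j - k" using pos_prop[OF dv jv] lv by auto
      have "before e (pos v (j - k) + k) (pos v (i - k) + k)" using eB2 pl pi by simp
      hence "before (phi k u v e) (zc k u v ! (pos v (j - k) + k)) (zc k u v ! (pos v (i - k) + k))"
        unfolding phi_def by (rule before_map_I)
      moreover have "zc k u v ! (pos v (i - k) + k) = i" using zc_ge[OF uP vP, of "pos v (i - k) + k"] pi r2 by simp
      moreover have "zc k u v ! (pos v (j - k) + k) = j" using zc_ge[OF uP vP, of "pos v (j - k) + k"] pj r2 by simp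
      ultimately show ?thesis by simp
    qed
  qed
  show ?thesis unfolding SF_before[OF hc]
    using wP R lc by (auto simp: Perm_def)
qed

lemma filter_lt_phi:
  assumes uP: "u \<in> Perm k" and vP: "v \<in> Perm k2" and e: "e \<in> Sh k k2"
  shows "filter (\<lambda>x. x < k) (phi k u v e) = u"
proof -
  let ?w = "phi k u v e"
  have zP: "zc k u v \<in> Perm (k + k2)" by (rule zc_perm[OF uP vP])
  have wP: "?w \<in> Perm (k + k2)" unfolding phi_def by (rule map_nth_perm[OF zP Sh_Perm[OF e]])
  have du: "distinct u" and su: "set u = {0..<k}" and lu: "length u = k" using uP Perm_length by (auto simp: Perm_def)
  have dw: "distinct ?w" and sw: "set ?w = {0..<k+k2}" using wP by (auto simp: Perm_def)
  have eB1: "\<forall>a b. a < b \<and> b < k \<longrightarrow> before e a b" using e Sh_before by blast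
  show ?thesis
  proof (rule sym, rule eq_by_before)
    show "distinct u" by (rule du)
    show "distinct (filter (\<lambda>x. x < k) ?w)" using dw by simp
    show "set u = set (filter (\<lambda>x. x < k) ?w)" using su sw by auto
    show "\<forall>a b. before u a b \<longrightarrow> before (filter (\<lambda>x. x < k) ?w) a b"
    proof (intro allI impI)
      fix a b assume ab: "before u a b"
      hence a: "a \<in> set u" and b: "b \<in> set u" and pl: "pos u a < pos u b" using before_pos[OF du] by auto
      have pa: "pos u a < k" "u ! pos u a = a" using pos_prop[OF du a] lu by auto
      have pb: "pos u b < k" "u ! pos u b = b" using pos_prop[OF du b] lu by auto
      have "before e (pos u a) (pos u b)" using eB1 pl pb by blast
      hence "before ?w (zc k u v ! pos u a) (zc k u v ! pos u b)" unfolding phi_def by (rule before_map_I)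
      hence "before ?w a b" using zc_lt[OF uP pa(1)] zc_lt[OF uP pb(1)] pa pb by simp
      moreover have "a < k" "b < k" using a b su by auto
      ultimately show "before (filter (\<lambda>x. x < k) ?w) a b" by (intro before_filter_I)
    qed
  qed
qed

lemma inj_minus: "inj_on (\<lambda>x. x - (k::nat)) {x. k \<le> x}"
  by (rule inj_onI) auto

lemma filter_ge_phi:
  assumes uP: "u \<in> Perm k" and vP: "v \<in> Perm k2" and e: "e \<in> Sh k k2"
  shows "map (\<lambda>x. x - k) (filter (\<lambda>x. k \<le> x) (phi k u v e)) = v"
proof -
  let ?w = "phi k u v e"
  let ?f = "filter (\<lambda>x. k \<le> x) ?w"
  have zP: "zc k u v \<in> Perm (k + k2)" by (rule zc_perm[OF uP vP])
  have wP: "?w \<in> Perm (k + k2)" unfolding phi_def by (rule map_nth_perm[OF zP Sh_Perm[OF e]])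
  have dv: "distinct v" and sv: "set v = {0..<k2}" and lv: "length v = k2" using vP Perm_length by (auto simp: Perm_def)
  have dw: "distinct ?w" and sw: "set ?w = {0..<k+k2}" using wP by (auto simp: Perm_def)
  have eB2: "\<forall>a b. k \<le> a \<and> a < b \<and> b < k + k2 \<longrightarrow> before e a b" using e Sh_before by blast
  have sf: "set ?f \<subseteq> {x. k \<le> x}" by auto
  have inj: "inj_on (\<lambda>x. x - k) (set ?f)" using inj_minus sf by (rule inj_on_subset)
  have sf2: "set ?f = {k..<k+k2}" using sw by auto
  show ?thesis
  proof (rule sym, rule eq_by_before)
    show "distinct v" by (rule dv)
    show "distinct (map (\<lambda>x. x - k) ?f)" using dw inj by (simp add: distinct_map)
    show "set v = set (map (\<lambda>x. x - k) ?f)"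
    proof -
      have "(\<lambda>x. x - k) ` {k..<k+k2} = {0..<k2}"
      proof (rule set_eqI, rule iffI)
        fix y assume "y \<in> {0..<k2}" thus "y \<in> (\<lambda>x. x - k) ` {k..<k+k2}" by (intro image_eqI[of _ _ "y + k"]) auto
      qed auto
      thus ?thesis using sv sf2 by simp
    qed
    show "\<forall>a b. before v a b \<longrightarrow> before (map (\<lambda>x. x - k) ?f) a b"
    proof (intro allI impI)
      fix a b assume ab: "before v a b"
      hence a: "a \<in> set v" and b: "b \<in> set v" and pl: "pos v a < pos v b" using before_pos[OF dv] by auto
      have pa: "pos v a < k2" "v ! pos v a = a" using pos_prop[OF dv a] lv by auto
      have pb: "pos v b < k2" "v ! pos v b = b" using pos_prop[OF dv b] lv by auto
      have "before e (pos v a + k) (pos v b + k)" using eB2 pl pb by simp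
      hence "before ?w (zc k u v ! (pos v a + k)) (zc k u v ! (pos v b + k))" unfolding phi_def by (rule before_map_I)
      moreover have "zc k u v ! (pos v a + k) = a + k" using zc_ge[OF uP vP, of "pos v a + k"] pa by simp
      moreover have "zc k u v ! (pos v b + k) = b + k" using zc_ge[OF uP vP, of "pos v b + k"] pb by simp
      ultimately have "before ?w (a + k) (b + k)" by simp
      hence "before ?f (a + k) (b + k)" by (intro before_filter_I) auto
      hence "before (map (\<lambda>x. x - k) ?f) ((\<lambda>x. x - k) (a + k)) ((\<lambda>x. x - k) (b + k))" by (rule before_map_I)
      thus "before (map (\<lambda>x. x - k) ?f) a b" by simp
    qed
  qed
qed

lemma phi_inj:
  assumes "u \<in> Perm k" "v \<in> Perm k2" "e \<in> Sh k k2" "u' \<in> Perm k" "v' \<in> Perm k2" "e' \<in> Sh k k2"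
    and eq: "phi k u v e = phi k u' v' e'"
  shows "u = u' \<and> v = v' \<and> e = e'"
proof -
  have u: "u = u'" using filter_lt_phi[OF assms(1-3)] filter_lt_phi[OF assms(4-6)] eq by simp
  have v: "v = v'" using filter_ge_phi[OF assms(1-3)] filter_ge_phi[OF assms(4-6)] eq by simp
  have zP: "zc k u v \<in> Perm (k + k2)" by (rule zc_perm[OF assms(1,2)])
  have dz: "distinct (zc k u v)" and lz: "length (zc k u v) = k + k2" using zP Perm_length by (auto simp: Perm_def)
  have se: "set e = {0..<k+k2}" "set e' = {0..<k+k2}" using Sh_Perm[OF assms(3)] Sh_Perm[OF assms(6)] by (auto simp: Perm_def)
  have inj: "inj_on (\<lambda>i. zc k u v ! i) (set e \<union> set e')" using dz lz se by (intro inj_on_nth) auto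
  have "map (\<lambda>i. zc k u v ! i) e = map (\<lambda>i. zc k u v ! i) e'" using eq u v by (simp add: phi_def)
  hence "e = e'" using inj_on_map_eq_map[OF inj] by simp
  thus ?thesis using u v by simp
qed


lemma phi_surj:
  assumes hp: "hforest ps" and hq: "hforest qs" and k: "k = length ps" and k2: "k2 = length qs"
    and w: "w \<in> S_F (ps @ shq k qs)"
  shows "\<exists>u\<in>S_F ps. \<exists>v\<in>S_F qs. \<exists>e\<in>Sh k k2. w = phi k u v e"
proof -
  have hc: "hforest (ps @ shq k qs)" using hforest_concat[OF hp hq] k by simp
  have lc: "length (ps @ shq k qs) = k + k2" using k k2 by (simp add: shq_def)
  have wP: "w \<in> Perm (k + k2)" using S_F_Perm[OF w] lc by simp
  have dw: "distinct w" and sw: "set w = {0..<k+k2}" using wP by (auto simp: Perm_def)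
  have wB: "\<forall>i j. f_reach (ps @ shq k qs) i j \<longrightarrow> before w j i" using w SF_before[OF hc] by blast
  define u where "u = filter (\<lambda>x. x < k) w"
  define f where "f = filter (\<lambda>x. k \<le> x) w"
  define v where "v = map (\<lambda>x. x - k) f"
  have du: "distinct u" using dw by (simp add: u_def)
  have su: "set u = {0..<k}" using sw by (auto simp: u_def)
  have uS: "u \<in> S_F ps" unfolding SF_before[OF hp]
  proof (intro conjI allI impI)
    show "distinct u" "set u = {0..<length ps}" using du su k by auto
    fix i j assume r: "f_reach ps i j"
    hence "f_reach (ps @ shq k qs) i j" using reach_concat[OF hp k] by blast
    hence "before w j i" using wB by blast
    moreover have "i < k" "j < k" using f_reach_src[OF r] f_reach_dec[OF hp r] k by auto
    ultimately show "before u j i" unfolding u_def by (intro before_filter_I)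
  qed
  have sf: "set f = {k..<k+k2}" using sw by (auto simp: f_def)
  have inj: "inj_on (\<lambda>x. x - k) (set f)" using inj_minus by (rule inj_on_subset) (auto simp: f_def)
  have dv: "distinct v" using dw inj by (simp add: v_def f_def distinct_map)
  have sv: "set v = {0..<k2}"
  proof -
    have "(\<lambda>x. x - k) ` {k..<k+k2} = {0..<k2}"
    proof (rule set_eqI, rule iffI)
      fix y assume "y \<in> {0..<k2}" thus "y \<in> (\<lambda>x. x - k) ` {k..<k+k2}" by (intro image_eqI[of _ _ "y + k"]) auto
    qed auto
    thus ?thesis using sf by (simp add: v_def)
  qed
  have vS: "v \<in> S_F qs" unfolding SF_before[OF hq]
  proof (intro conjI allI impI)
    show "distinct v" "set v = {0..<length qs}" using dv sv k2 by auto
    fix i j assume r: "f_reach qs i j"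
    hence "f_reach (ps @ shq k qs) (i + k) (j + k)" using reach_concat[OF hp k] by simp
    hence "before w (j + k) (i + k)" using wB by blast
    hence "before f (j + k) (i + k)" unfolding f_def by (intro before_filter_I) auto
    hence "before v ((\<lambda>x. x - k) (j + k)) ((\<lambda>x. x - k) (i + k))" unfolding v_def by (rule before_map_I)
    thus "before v j i" by simp
  qed
  have uP: "u \<in> Perm k" using du su by (simp add: Perm_def)
  have vP: "v \<in> Perm k2" using dv sv by (simp add: Perm_def)
  define z where "z = zc k u v"
  have zP: "z \<in> Perm (k + k2)" unfolding z_def by (rule zc_perm[OF uP vP])
  have dz: "distinct z" and sz: "set z = {0..<k+k2}" and lz: "length z = k + k2"
    using zP Perm_length by (auto simp: Perm_def)
  define e where "e = map (pos z) w"
  have zpos: "\<And>x. x \<in> set w \<Longrightarrow> z ! pos z x = x" using pos_prop[OF dz] sz sw by auto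
  have injp: "inj_on (pos z) (set w)"
  proof (rule inj_onI)
    fix x y assume "x \<in> set w" "y \<in> set w" "pos z x = pos z y"
    hence "z ! pos z x = z ! pos z y" by simp
    thus "x = y" using zpos \<open>x \<in> set w\<close> \<open>y \<in> set w\<close> by simp
  qed
  have de: "distinct e" using dw injp by (simp add: e_def distinct_map)
  have se: "set e = {0..<k+k2}"
  proof
    show "set e \<subseteq> {0..<k+k2}" using pos_prop[OF dz] sz sw lz by (auto simp: e_def)
    show "{0..<k+k2} \<subseteq> set e"
    proof
      fix i assume i: "i \<in> {0..<k+k2}"
      hence "i < length z" using lz by simp
      hence "z ! i \<in> set z" by (rule nth_mem)
      hence "z ! i \<in> set w" using sz sw by simp
      moreover have "pos z (z ! i) = i" using pos_nth[OF dz] i lz by simp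
      ultimately have "i \<in> pos z ` set w" by (metis image_eqI)
      thus "i \<in> set e" unfolding e_def by simp
    qed
  qed
  have eS: "e \<in> Sh k k2" unfolding Sh_before
  proof (intro conjI allI impI)
    show "distinct e" "set e = {0..<k+k2}" using de se by auto
    fix a b
    assume ab: "a < b \<and> b < k"
    have lu: "length u = k" using uP Perm_length by simp
    have "before u (u ! a) (u ! b)" using before_nth[OF du] ab lu by simp
    hence "before w (u ! a) (u ! b)" unfolding u_def by (rule before_filter_D)
    hence "before e (pos z (u ! a)) (pos z (u ! b))" unfolding e_def by (rule before_map_I)
    moreover have "u ! a = z ! a" "u ! b = z ! b" using zc_lt[OF uP] ab by (auto simp: z_def)
    moreover have "pos z (z ! a) = a" "pos z (z ! b) = b" using pos_nth[OF dz] ab lz by auto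
    ultimately show "before e a b" by simp
  next
    fix a b
    assume ab: "k \<le> a \<and> a < b \<and> b < k + k2"
    have lv: "length v = k2" using vP Perm_length by simp
    define X where "X = v ! (a - k) + k"
    define Y where "Y = v ! (b - k) + k"
    have "a - k < b - k" "b - k < length v" using ab lv by auto
    hence "before v (v ! (a - k)) (v ! (b - k))" using before_nth[OF dv] by blast
    moreover have "v ! (a - k) = (\<lambda>x. x - k) X" "v ! (b - k) = (\<lambda>x. x - k) Y" by (auto simp: X_def Y_def)
    ultimately have "before (map (\<lambda>x. x - k) f) ((\<lambda>x. x - k) X) ((\<lambda>x. x - k) Y)" by (simp add: v_def)
    moreover have XY: "X \<in> set f" "Y \<in> set f"
    proof -
      have "v ! (a - k) \<in> set v" "v ! (b - k) \<in> set v" using ab lv by auto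
      thus "X \<in> set f" "Y \<in> set f" using sv sf by (auto simp: X_def Y_def)
    qed
    ultimately have "before f X Y" using before_map_D[OF _ inj XY] by blast
    hence "before w X Y" unfolding f_def by (rule before_filter_D)
    hence "before e (pos z X) (pos z Y)" unfolding e_def by (rule before_map_I)
    moreover have "X = z ! a" "Y = z ! b" using zc_ge[OF uP vP] ab by (auto simp: z_def X_def Y_def)
    moreover have "pos z (z ! a) = a" "pos z (z ! b) = b" using pos_nth[OF dz] ab lz by auto
    ultimately show "before e a b" by simp
  qed
  have "phi k u v e = w"
  proof -
    have "phi k u v e = map (\<lambda>x. z ! pos z x) w" by (simp add: phi_def e_def z_def)
    also have "\<dots> = w" using zpos by (intro map_idI) auto
    finally show ?thesis .
  qed
  hence "w = phi k u v e" by simp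
  with uS vS eS show ?thesis by blast
qed

lemma phi_bij:
  assumes hp: "hforest ps" and hq: "hforest qs" and k: "k = length ps" and k2: "k2 = length qs"
  shows "bij_betw (\<lambda>(u, v, e). phi k u v e) (S_F ps \<times> (S_F qs \<times> Sh k k2)) (S_F (ps @ shq k qs))"
  unfolding bij_betw_def
proof
  show "inj_on (\<lambda>(u, v, e). phi k u v e) (S_F ps \<times> (S_F qs \<times> Sh k k2))"
  proof (rule inj_onI)
    fix x y assume x: "x \<in> S_F ps \<times> (S_F qs \<times> Sh k k2)" and y: "y \<in> S_F ps \<times> (S_F qs \<times> Sh k k2)"
      and eq: "(\<lambda>(u, v, e). phi k u v e) x = (\<lambda>(u, v, e). phi k u v e) y"
    obtain u v e where xe: "x = (u, v, e)" by (cases x) auto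
    obtain u' v' e' where ye: "y = (u', v', e')" by (cases y) auto
    have P1: "\<And>x. x \<in> S_F ps \<Longrightarrow> x \<in> Perm k" using S_F_Perm k by blast
    have P2: "\<And>x. x \<in> S_F qs \<Longrightarrow> x \<in> Perm k2" using S_F_Perm k2 by blast
    have "u \<in> Perm k" "v \<in> Perm k2" "e \<in> Sh k k2" using x xe P1 P2 by auto
    moreover have "u' \<in> Perm k" "v' \<in> Perm k2" "e' \<in> Sh k k2" using y ye P1 P2 by auto
    moreover have "phi k u v e = phi k u' v' e'" using eq xe ye by simp
    ultimately have "u = u' \<and> v = v' \<and> e = e'" by (rule phi_inj)
    thus "x = y" using xe ye by simp
  qed
  show "(\<lambda>(u, v, e). phi k u v e) ` (S_F ps \<times> (S_F qs \<times> Sh k k2)) = S_F (ps @ shq k qs)"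
  proof
    show "(\<lambda>(u, v, e). phi k u v e) ` (S_F ps \<times> (S_F qs \<times> Sh k k2)) \<subseteq> S_F (ps @ shq k qs)"
      using phi_in[OF hp hq k k2] by auto
    show "S_F (ps @ shq k qs) \<subseteq> (\<lambda>(u, v, e). phi k u v e) ` (S_F ps \<times> (S_F qs \<times> Sh k k2))"
    proof
      fix w assume "w \<in> S_F (ps @ shq k qs)"
      then obtain u v e where "u \<in> S_F ps" "v \<in> S_F qs" "e \<in> Sh k k2" "w = phi k u v e"
        using phi_surj[OF hp hq k k2] by blast
      thus "w \<in> (\<lambda>(u, v, e). phi k u v e) ` (S_F ps \<times> (S_F qs \<times> Sh k k2))"
        by (intro image_eqI[of _ _ "(u, v, e)"]) auto
    qed
  qed
qed

lemma finite_Sh: "finite (Sh k k2)"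
  using finite_Perm[of "k + k2"] Sh_Perm by (meson finite_subset subsetI)

lemma prod_basis:
  assumes hp: "hforest (fst F)" and hq: "hforest (fst G)"
  shows "theta_basis (hf_mult F G) c =
    (\<Sum>u\<in>S_F (fst F). \<Sum>v\<in>S_F (fst G). (fq_mult_basis (u, snd F) (v, snd G) c :: 'k::semiring_1))"
proof -
  let ?k = "length (fst F)" and ?k2 = "length (fst G)"
  let ?g = "\<lambda>w. if (w, snd F @ snd G) = c then (1::'k) else 0"
  have hm: "hf_mult F G = (fst F @ shq ?k (fst G), snd F @ snd G)" by (simp add: hf_mult_def shq_def)
  have "theta_basis (hf_mult F G) c = (\<Sum>w\<in>S_F (fst F @ shq ?k (fst G)). ?g w)"
    unfolding hm theta_basis_def by simp
  also have "\<dots> = (\<Sum>x\<in>S_F (fst F) \<times> (S_F (fst G) \<times> Sh ?k ?k2). ?g ((\<lambda>(u, v, e). phi ?k u v e) x))"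
    by (rule sum.reindex_bij_betw[symmetric, OF phi_bij[OF hp hq refl refl]])
  also have "\<dots> = (\<Sum>(u, v, e)\<in>S_F (fst F) \<times> (S_F (fst G) \<times> Sh ?k ?k2). ?g (phi ?k u v e))"
    by (rule sum.cong[OF refl]) (simp only: split_def)
  also have "\<dots> = (\<Sum>u\<in>S_F (fst F). \<Sum>(v, e)\<in>S_F (fst G) \<times> Sh ?k ?k2. ?g (phi ?k u v e))"
    by (rule sum.cartesian_product[symmetric])
  also have "\<dots> = (\<Sum>u\<in>S_F (fst F). \<Sum>v\<in>S_F (fst G). \<Sum>e\<in>Sh ?k ?k2. ?g (phi ?k u v e))"
    by (rule sum.cong[OF refl], rule sum.cartesian_product[symmetric])
  also have "\<dots> = (\<Sum>u\<in>S_F (fst F). \<Sum>v\<in>S_F (fst G). fq_mult_basis (u, snd F) (v, snd G) c)"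
  proof (intro sum.cong refl)
    fix u v assume u: "u \<in> S_F (fst F)" and v: "v \<in> S_F (fst G)"
    have lu: "length u = ?k" and lv: "length v = ?k2" using S_F_length u v by auto
    show "(\<Sum>e\<in>Sh ?k ?k2. ?g (phi ?k u v e)) = fq_mult_basis (u, snd F) (v, snd G) c"
      unfolding fq_mult_basis_def fst_conv snd_conv lu lv by (simp add: phi_def zc_def)
  qed
  finally show ?thesis .
qed


lemma HF_hforest: "F \<in> HF d \<Longrightarrow> hforest (fst F)"
  by (auto simp: HF_def heap_ordered_iff)

lemma bilin_as_lin:
  fixes X :: "'a \<Rightarrow> 'k::comm_semiring_0"
  shows "bilin_ext m X Y c = lin_ext (\<lambda>p. lin_ext (m p) Y) X c"
  unfolding bilin_ext_def lin_ext_def by (simp add: sum_distrib_left mult.assoc)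

lemma lin_ext_theta:
  "lin_ext g (theta_basis F) c = (\<Sum>u\<in>S_F (fst F). g (u, snd F) c)"
  unfolding theta_basis_ind by (rule lin_ext_ind[OF finite_S_F])

lemma Theta_as_lin: "Theta x = lin_ext theta_basis x" unfolding Theta_def ..

lemma Theta_mult:
  assumes x: "x \<in> fvec (HF d)" and y: "y \<in> fvec (HF d)"
  shows "Theta (H_mult x y :: dforest \<Rightarrow> 'k::field) = F_mult (Theta x) (Theta y)"
proof (rule ext)
  fix c
  have fx: "finite (supp x)" and fy: "finite (supp y)" using x y by (auto simp: fvec_def)
  have hx: "\<And>a. a \<in> supp x \<Longrightarrow> hforest (fst a)" using x HF_hforest by (auto simp: fvec_def)
  have hy: "\<And>b. b \<in> supp y \<Longrightarrow> hforest (fst b)" using y HF_hforest by (auto simp: fvec_def)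
  let ?V = "\<lambda>a b. (\<Sum>u\<in>S_F (fst a). \<Sum>v\<in>S_F (fst b). (fq_mult_basis (u, snd a) (v, snd b) c :: 'k))"
  have H: "H_mult x y = (\<lambda>F. \<Sum>ab\<in>supp x \<times> supp y. (x (fst ab) * y (snd ab)) * bvec (hf_mult (fst ab) (snd ab)) F)"
  proof (rule ext)
    fix F
    show "H_mult x y F = (\<Sum>ab\<in>supp x \<times> supp y. (x (fst ab) * y (snd ab)) * bvec (hf_mult (fst ab) (snd ab)) F)"
      unfolding H_mult_def bilin_ext_def by (simp add: sum.cartesian_product split_def)
  qed
  have "Theta (H_mult x y) c = (\<Sum>ab\<in>supp x \<times> supp y. (x (fst ab) * y (snd ab)) * Theta (bvec (hf_mult (fst ab) (snd ab)) :: dforest \<Rightarrow> 'k) c)"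
    unfolding H by (subst Theta_sum) (auto simp: fx fy supp_bvec)
  also have "\<dots> = (\<Sum>a\<in>supp x. \<Sum>b\<in>supp y. x a * y b * theta_basis (hf_mult a b) c)"
    by (simp add: Theta_bvec sum.cartesian_product split_def)
  also have "\<dots> = (\<Sum>a\<in>supp x. \<Sum>b\<in>supp y. x a * y b * ?V a b)"
  proof (intro sum.cong refl)
    fix a b assume a: "a \<in> supp x" and b: "b \<in> supp y"
    have "theta_basis (hf_mult a b) c = ?V a b" by (rule prod_basis[OF hx[OF a] hy[OF b]])
    thus "x a * y b * theta_basis (hf_mult a b) c = x a * y b * ?V a b" by simp
  qed
  finally have L: "Theta (H_mult x y) c = (\<Sum>a\<in>supp x. \<Sum>b\<in>supp y. x a * y b * ?V a b)" .
  let ?g = "\<lambda>p. lin_ext (fq_mult_basis p) (Theta y) :: dperm \<Rightarrow> 'k"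
  have g: "\<And>p. ?g p c = (\<Sum>b\<in>supp y. y b * (\<Sum>v\<in>S_F (fst b). fq_mult_basis p (v, snd b) c))"
    unfolding Theta_as_lin by (subst lin_ext_comp) (auto simp: fy finite_supp_theta lin_ext_theta)
  have "F_mult (Theta x) (Theta y) c = lin_ext ?g (Theta x) c"
    unfolding F_mult_def by (rule bilin_as_lin)
  also have "\<dots> = (\<Sum>a\<in>supp x. x a * lin_ext ?g (theta_basis a) c)"
    unfolding Theta_as_lin[of x] by (rule lin_ext_comp) (auto simp: fx finite_supp_theta)
  also have "\<dots> = (\<Sum>a\<in>supp x. x a * (\<Sum>u\<in>S_F (fst a). \<Sum>b\<in>supp y. y b * (\<Sum>v\<in>S_F (fst b). fq_mult_basis (u, snd a) (v, snd b) c)))"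
    by (simp add: lin_ext_theta g)
  also have "\<dots> = (\<Sum>a\<in>supp x. \<Sum>b\<in>supp y. x a * y b * ?V a b)"
  proof (rule sum.cong[OF refl])
    fix a
    have "(\<Sum>u\<in>S_F (fst a). \<Sum>b\<in>supp y. y b * (\<Sum>v\<in>S_F (fst b). fq_mult_basis (u, snd a) (v, snd b) c))
        = (\<Sum>b\<in>supp y. \<Sum>u\<in>S_F (fst a). y b * (\<Sum>v\<in>S_F (fst b). fq_mult_basis (u, snd a) (v, snd b) c))"
      by (rule sum.swap)
    also have "\<dots> = (\<Sum>b\<in>supp y. y b * ?V a b)" by (simp add: sum_distrib_left)
    finally show "x a * (\<Sum>u\<in>S_F (fst a). \<Sum>b\<in>supp y. y b * (\<Sum>v\<in>S_F (fst b). fq_mult_basis (u, snd a) (v, snd b) c))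
        = (\<Sum>b\<in>supp y. x a * y b * ?V a b)" by (simp add: sum_distrib_left mult.assoc)
  qed
  finally show "Theta (H_mult x y) c = F_mult (Theta x) (Theta y) c" using L by simp
qed


definition rk :: "nat set \<Rightarrow> nat \<Rightarrow> nat" where
  "rk S x = card {s \<in> S. s < x}"

abbreviation sls :: "nat set \<Rightarrow> nat list" where "sls S \<equiv> sorted_list_of_set S"

lemma sls_facts:
  assumes "finite S"
  shows "length (sls S) = card S" "distinct (sls S)" "set (sls S) = S" "sorted_wrt (<) (sls S)"
  using assms by auto

lemma sls_less_iff:
  assumes "finite S" "i < card S" "j < card S"
  shows "sls S ! i < sls S ! j \<longleftrightarrow> i < j"
proof -
  have s: "sorted_wrt (<) (sls S)" and l: "length (sls S) = card S" using sls_facts[OF assms(1)] by auto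
  show ?thesis
  proof
    assume a: "sls S ! i < sls S ! j"
    show "i < j"
    proof (rule ccontr)
      assume "\<not> i < j"
      hence "j < i \<or> j = i" by auto
      thus False
      proof
        assume "j < i" hence "sls S ! j < sls S ! i" using sorted_wrt_nth_less[OF s] assms l by simp
        thus False using a by simp
      next
        assume "j = i" thus False using a by simp
      qed
    qed
  next
    assume "i < j" thus "sls S ! i < sls S ! j" using sorted_wrt_nth_less[OF s] assms l by simp
  qed
qed

lemma rk_nth:
  assumes "finite S" "i < card S"
  shows "rk S (sls S ! i) = i"
proof -
  have l: "length (sls S) = card S" and st: "set (sls S) = S" using sls_facts[OF assms(1)] by auto
  have "{s \<in> S. s < sls S ! i} = (\<lambda>j. sls S ! j) ` {0..<i}"
  proof (rule set_eqI, rule iffI)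
    fix s assume "s \<in> {s \<in> S. s < sls S ! i}"
    hence s: "s \<in> S" "s < sls S ! i" by auto
    then obtain j where j: "j < card S" "sls S ! j = s" using st l by (metis in_set_conv_nth)
    have "j < i" using sls_less_iff[OF assms(1) j(1) assms(2)] j s by simp
    thus "s \<in> (\<lambda>j. sls S ! j) ` {0..<i}" using j by auto
  next
    fix s assume "s \<in> (\<lambda>j. sls S ! j) ` {0..<i}"
    then obtain j where j: "j < i" "s = sls S ! j" by auto
    have "j < card S" using j assms by simp
    hence "s \<in> S" using j st l by (metis nth_mem)
    moreover have "s < sls S ! i" using sls_less_iff[OF assms(1) \<open>j < card S\<close> assms(2)] j by simp
    ultimately show "s \<in> {s \<in> S. s < sls S ! i}" by simp
  qed
  moreover have "inj_on (\<lambda>j. sls S ! j) {0..<i}"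
    using sls_facts[OF assms(1)] assms(2) by (intro inj_on_nth) auto
  ultimately show ?thesis unfolding rk_def by (simp add: card_image)
qed

lemma rk_in:
  assumes "finite S" "x \<in> S"
  shows "rk S x < card S \<and> sls S ! rk S x = x"
proof -
  have l: "length (sls S) = card S" and st: "set (sls S) = S" using sls_facts[OF assms(1)] by auto
  obtain i where i: "i < card S" "sls S ! i = x" using assms(2) st l by (metis in_set_conv_nth)
  thus ?thesis using rk_nth[OF assms(1) i(1)] by simp
qed

definition sfp :: "nat option list \<Rightarrow> nat set \<Rightarrow> nat option list" where
  "sfp ps S = map (\<lambda>i. case ps ! i of None \<Rightarrow> None
                  | Some j \<Rightarrow> (if j \<in> S then Some (rk S j) else None)) (sls S)"

lemma sub_forest_eq: "sub_forest F S = (sfp (fst F) S, map (\<lambda>i. snd F ! i) (sls S))"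
  unfolding sub_forest_def sfp_def rk_def Let_def by simp

lemma sfp_length: "finite S \<Longrightarrow> length (sfp ps S) = card S"
  by (simp add: sfp_def)

lemma sfp_edges:
  assumes "finite S"
  shows "(a, b) \<in> f_edges (sfp ps S) \<longleftrightarrow> a < card S \<and> b < card S \<and> ps ! (sls S ! a) = Some (sls S ! b)"
proof
  assume "(a, b) \<in> f_edges (sfp ps S)"
  hence a: "a < card S" and e: "sfp ps S ! a = Some b" by (auto simp: f_edges_def sfp_length[OF assms])
  have l: "length (sls S) = card S" using assms by simp
  from e a l obtain j where j: "ps ! (sls S ! a) = Some j" "j \<in> S" "b = rk S j"
    by (auto simp: sfp_def split: option.splits if_splits)
  thus "a < card S \<and> b < card S \<and> ps ! (sls S ! a) = Some (sls S ! b)" using rk_in[OF assms j(2)] a by simp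
next
  assume h: "a < card S \<and> b < card S \<and> ps ! (sls S ! a) = Some (sls S ! b)"
  have l: "length (sls S) = card S" and st: "set (sls S) = S" using assms by auto
  have "sls S ! b \<in> S" using h l st by (metis nth_mem)
  hence "sfp ps S ! a = Some b" using h l rk_nth[OF assms] by (simp add: sfp_def)
  thus "(a, b) \<in> f_edges (sfp ps S)" using h by (simp add: f_edges_def sfp_length[OF assms])
qed

lemma reach_sub:
  assumes fin: "finite S" and Sn: "S \<subseteq> {0..<length ps}"
    and conv: "\<And>x y z. x \<in> S \<Longrightarrow> z \<in> S \<Longrightarrow> f_reach ps x y \<Longrightarrow> f_reach ps y z \<Longrightarrow> y \<in> S"
  shows "f_reach (sfp ps S) a b \<longleftrightarrow> a < card S \<and> b < card S \<and> f_reach ps (sls S ! a) (sls S ! b)"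
proof
  have l: "length (sls S) = card S" and st: "set (sls S) = S" using fin by auto
  have inS: "\<And>i. i < card S \<Longrightarrow> sls S ! i \<in> S" using l st by (metis nth_mem)
  assume "f_reach (sfp ps S) a b"
  thus "a < card S \<and> b < card S \<and> f_reach ps (sls S ! a) (sls S ! b)"
    unfolding f_reach_def
  proof (induct rule: trancl_induct)
    case (base y)
    hence h: "a < card S" "y < card S" "ps ! (sls S ! a) = Some (sls S ! y)" using sfp_edges[OF fin] by auto
    have "sls S ! a < length ps" using inS[OF h(1)] Sn by auto
    hence "(sls S ! a, sls S ! y) \<in> f_edges ps" using h by (simp add: f_edges_def)
    thus ?case using h by auto
  next
    case (step y z)
    hence h: "y < card S" "z < card S" "ps ! (sls S ! y) = Some (sls S ! z)" using sfp_edges[OF fin] by auto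
    have "sls S ! y < length ps" using inS[OF h(1)] Sn by auto
    hence "(sls S ! y, sls S ! z) \<in> f_edges ps" using h by (simp add: f_edges_def)
    thus ?case using step(3) h by (auto intro: trancl_into_trancl)
  qed
next
  assume h: "a < card S \<and> b < card S \<and> f_reach ps (sls S ! a) (sls S ! b)"
  have l: "length (sls S) = card S" and st: "set (sls S) = S" using fin by auto
  have inS: "\<And>i. i < card S \<Longrightarrow> sls S ! i \<in> S" using l st by (metis nth_mem)
  define x where "x = sls S ! a"
  have xS: "x \<in> S" using inS h by (simp add: x_def)
  have gen: "\<And>z. (x, z) \<in> (f_edges ps)\<^sup>+ \<Longrightarrow> z \<in> S \<Longrightarrow> (rk S x, rk S z) \<in> (f_edges (sfp ps S))\<^sup>+"
  proof -
    fix z assume "(x, z) \<in> (f_edges ps)\<^sup>+"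
    thus "z \<in> S \<Longrightarrow> (rk S x, rk S z) \<in> (f_edges (sfp ps S))\<^sup>+"
    proof (induct rule: trancl_induct)
      case (base y)
      have ry: "rk S y < card S" "sls S ! rk S y = y" using rk_in[OF fin base(2)] by auto
      have rx: "rk S x < card S" "sls S ! rk S x = x" using rk_in[OF fin xS] by auto
      have "ps ! x = Some y" using base(1) by (simp add: f_edges_def)
      hence "(rk S x, rk S y) \<in> f_edges (sfp ps S)" using sfp_edges[OF fin] rx ry by simp
      thus ?case by (rule r_into_trancl)
    next
      case (step y z)
      have yS: "y \<in> S"
        by (rule conv[OF xS step(4)]) (use step(1,2) in \<open>auto simp: f_reach_def\<close>)
      have ry: "rk S y < card S" "sls S ! rk S y = y" using rk_in[OF fin yS] by auto
      have rz: "rk S z < card S" "sls S ! rk S z = z" using rk_in[OF fin step(4)] by auto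
      have "ps ! y = Some z" using step(2) by (simp add: f_edges_def)
      hence "(rk S y, rk S z) \<in> f_edges (sfp ps S)" using sfp_edges[OF fin] ry rz by simp
      thus ?case using step(3)[OF yS] by (rule trancl_into_trancl[rotated])
    qed
  qed
  have "(rk S x, rk S (sls S ! b)) \<in> (f_edges (sfp ps S))\<^sup>+"
    using gen h inS unfolding x_def f_reach_def by blast
  thus "f_reach (sfp ps S) a b" using rk_nth[OF fin] h unfolding x_def f_reach_def by simp
qed

lemma sfp_hforest:
  assumes fin: "finite S" and hp: "hforest ps" and Sn: "S \<subseteq> {0..<length ps}"
  shows "hforest (sfp ps S)"
  unfolding hforest_def
proof (intro allI impI)
  fix a b assume a: "a < length (sfp ps S)" "sfp ps S ! a = Some b"
  hence "(a, b) \<in> f_edges (sfp ps S)" by (simp add: f_edges_def)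
  hence h: "a < card S" "b < card S" "ps ! (sls S ! a) = Some (sls S ! b)" using sfp_edges[OF fin] by auto
  have "sls S ! a \<in> S" using h fin by (metis nth_mem length_sorted_list_of_set set_sorted_list_of_set)
  hence "sls S ! a < length ps" using Sn by auto
  hence "sls S ! b < sls S ! a" using hp h by (simp add: hforest_def)
  thus "b < a" using sls_less_iff[OF fin h(2) h(1)] by simp
qed


lemma f_reach_trans: "f_reach ps x y \<Longrightarrow> f_reach ps y z \<Longrightarrow> f_reach ps x z"
  unfolding f_reach_def by (rule trancl_trans)

lemma lea_sub: "V \<in> admissible_cuts ps \<Longrightarrow> lea_set ps V \<subseteq> {0..<length ps}"
  by (auto simp: admissible_cuts_def lea_set_def)

lemma lea_back:
  assumes "f_reach ps y z" "z \<in> lea_set ps V"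
  shows "y \<in> lea_set ps V"
proof -
  have yn: "y < length ps" using f_reach_src[OF assms(1)] .
  from assms(2) have "z \<in> V \<or> (\<exists>v\<in>V. f_reach ps z v)" by (auto simp: lea_set_def)
  thus ?thesis
  proof
    assume "z \<in> V" thus ?thesis using assms(1) yn by (auto simp: lea_set_def)
  next
    assume "\<exists>v\<in>V. f_reach ps z v"
    then obtain v where "v \<in> V" "f_reach ps z v" by blast
    hence "f_reach ps y v" using f_reach_trans assms(1) by blast
    thus ?thesis using \<open>v \<in> V\<close> yn by (auto simp: lea_set_def)
  qed
qed

lemma R_forward:
  assumes hp: "hforest ps" and x: "x \<in> {0..<length ps} - lea_set ps V" and r: "f_reach ps x y"
  shows "y \<in> {0..<length ps} - lea_set ps V"
proof -
  have "y < x" using f_reach_dec[OF hp r] .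
  moreover have "y \<notin> lea_set ps V" using lea_back[OF r] x by blast
  ultimately show ?thesis using x by auto
qed

lemma V_recover:
  assumes V: "V \<in> admissible_cuts ps"
  shows "V = {x \<in> lea_set ps V. \<forall>y\<in>lea_set ps V. \<not> f_reach ps x y}"
proof (rule set_eqI, rule iffI)
  fix x assume x: "x \<in> V"
  have ac: "\<forall>v\<in>V. \<forall>w\<in>V. \<not> f_reach ps v w" using V by (simp add: admissible_cuts_def)
  have "\<forall>y\<in>lea_set ps V. \<not> f_reach ps x y"
  proof
    fix y assume y: "y \<in> lea_set ps V"
    show "\<not> f_reach ps x y"
    proof
      assume r: "f_reach ps x y"
      from y have "y \<in> V \<or> (\<exists>v\<in>V. f_reach ps y v)" by (auto simp: lea_set_def)
      thus False
      proof
        assume "y \<in> V" thus False using ac x r by blast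
      next
        assume "\<exists>v\<in>V. f_reach ps y v"
        then obtain v where "v \<in> V" "f_reach ps y v" by blast
        thus False using ac x r f_reach_trans by blast
      qed
    qed
  qed
  thus "x \<in> {x \<in> lea_set ps V. \<forall>y\<in>lea_set ps V. \<not> f_reach ps x y}" using x by (auto simp: lea_set_def)
next
  fix x assume x: "x \<in> {x \<in> lea_set ps V. \<forall>y\<in>lea_set ps V. \<not> f_reach ps x y}"
  show "x \<in> V"
  proof (rule ccontr)
    assume "x \<notin> V"
    then obtain v where "v \<in> V" "f_reach ps x v" using x by (auto simp: lea_set_def)
    moreover have "v \<in> lea_set ps V" using \<open>v \<in> V\<close> by (simp add: lea_set_def)
    ultimately show False using x by blast
  qed
qed

lemma finite_cuts: "finite (admissible_cuts ps)"
proof -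
  have "admissible_cuts ps \<subseteq> Pow {0..<length ps}" by (auto simp: admissible_cuts_def)
  thus ?thesis by (rule finite_subset) simp
qed

lemma pos_take:
  assumes "distinct w" "x \<in> set w"
  shows "x \<in> set (take k w) \<longleftrightarrow> pos w x < k"
proof -
  have p: "pos w x < length w" "w ! pos w x = x" using pos_prop[OF assms] by auto
  show ?thesis
  proof
    assume "x \<in> set (take k w)"
    then obtain i where i: "i < length (take k w)" "take k w ! i = x" by (auto simp: in_set_conv_nth)
    hence "w ! i = x" "i < length w" "i < k" by auto
    hence "pos w x = i" using pos_nth[OF assms(1)] by blast
    thus "pos w x < k" using \<open>i < k\<close> by simp
  next
    assume "pos w x < k"
    hence "take k w ! pos w x = x" "pos w x < length (take k w)" using p by auto
    thus "x \<in> set (take k w)" by (metis nth_mem)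
  qed
qed

lemma take_drop_disj: "distinct w \<Longrightarrow> set (take k w) \<inter> set (drop k w) = {}"
  by (metis append_take_drop_id distinct_append)

lemma drop_back:
  assumes d: "distinct w" and b: "before w a b" and a: "a \<in> set (drop k w)"
  shows "b \<in> set (drop k w)"
proof -
  have ab: "a \<in> set w" "b \<in> set w" "pos w a < pos w b" using before_pos[OF d] b by auto
  have "\<not> pos w a < k" using pos_take[OF d ab(1)] a take_drop_disj[OF d] by blast
  hence "\<not> pos w b < k" using ab by simp
  hence "b \<notin> set (take k w)" using pos_take[OF d ab(2)] by simp
  moreover have "b \<in> set (take k w) \<union> set (drop k w)" using ab(2) by (metis append_take_drop_id set_append)
  ultimately show ?thesis by blast
qed

definition Vof :: "nat option list \<Rightarrow> nat set \<Rightarrow> nat set" where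
  "Vof ps L = {x \<in> L. \<forall>y\<in>L. \<not> f_reach ps x y}"

lemma Vof_cut:
  assumes "L \<subseteq> {0..<length ps}"
  shows "Vof ps L \<in> admissible_cuts ps"
  using assms by (auto simp: Vof_def admissible_cuts_def)

lemma Vof_lea:
  assumes hp: "hforest ps" and Ln: "L \<subseteq> {0..<length ps}"
    and bk: "\<And>y z. f_reach ps y z \<Longrightarrow> z \<in> L \<Longrightarrow> y \<in> L"
  shows "lea_set ps (Vof ps L) = L"
proof (rule set_eqI, rule iffI)
  fix x assume "x \<in> lea_set ps (Vof ps L)"
  hence "x \<in> Vof ps L \<or> (\<exists>v\<in>Vof ps L. f_reach ps x v)" by (auto simp: lea_set_def)
  thus "x \<in> L"
  proof
    assume "x \<in> Vof ps L" thus ?thesis by (simp add: Vof_def)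
  next
    assume "\<exists>v\<in>Vof ps L. f_reach ps x v"
    then obtain v where "v \<in> L" "f_reach ps x v" by (auto simp: Vof_def)
    thus ?thesis using bk by blast
  qed
next
  fix x assume x: "x \<in> L"
  let ?Y = "{y \<in> L. f_reach ps x y}"
  show "x \<in> lea_set ps (Vof ps L)"
  proof (cases "?Y = {}")
    case True
    hence "x \<in> Vof ps L" using x by (auto simp: Vof_def)
    thus ?thesis by (simp add: lea_set_def)
  next
    case False
    have "?Y \<subseteq> {0..<length ps}" using Ln by auto
    hence fY: "finite ?Y" by (rule finite_subset) simp
    define y0 where "y0 = Min ?Y"
    have y0: "y0 \<in> ?Y" using Min_in[OF fY False] by (simp add: y0_def)
    have "y0 \<in> Vof ps L"
    proof -
      have "\<forall>z\<in>L. \<not> f_reach ps y0 z"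
      proof (intro ballI notI)
        fix z assume z: "z \<in> L" and r: "f_reach ps y0 z"
        hence "z \<in> ?Y" using y0 f_reach_trans by blast
        hence "y0 \<le> z" using Min_le[OF fY] by (simp add: y0_def)
        moreover have "z < y0" using f_reach_dec[OF hp r] .
        ultimately show False by simp
      qed
      thus ?thesis using y0 by (simp add: Vof_def)
    qed
    moreover have "x < length ps" using x Ln by auto
    ultimately show ?thesis using y0 by (auto simp: lea_set_def)
  qed
qed


lemma before_append_L: "before xs a b \<Longrightarrow> before (xs @ ys) a b"
  unfolding before_def by force

lemma before_append_R: "before ys a b \<Longrightarrow> before (xs @ ys) a b"
proof -
  assume "before ys a b"
  then obtain s t where "ys = s @ b # t" "a \<in> set s" by (auto simp: before_def)
  hence "xs @ ys = (xs @ s) @ b # t" "a \<in> set (xs @ s)" by auto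
  thus ?thesis unfolding before_def by blast
qed

lemma before_cross: "a \<in> set xs \<Longrightarrow> b \<in> set ys \<Longrightarrow> before (xs @ ys) a b"
proof -
  assume "a \<in> set xs" "b \<in> set ys"
  then obtain s t where "ys = s @ b # t" by (meson split_list)
  hence "xs @ ys = (xs @ s) @ b # t" "a \<in> set (xs @ s)" using \<open>a \<in> set xs\<close> by auto
  thus ?thesis unfolding before_def by blast
qed

lemma filter_app_L: "distinct (xs @ ys) \<Longrightarrow> filter (\<lambda>x. x \<in> set xs) (xs @ ys) = xs"
proof -
  assume d: "distinct (xs @ ys)"
  have "filter (\<lambda>x. x \<in> set xs) xs = xs" by (rule filter_True) simp
  moreover have "filter (\<lambda>x. x \<in> set xs) ys = []" using d by (intro filter_False) auto
  ultimately show ?thesis by simp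
qed

lemma filter_app_R: "distinct (xs @ ys) \<Longrightarrow> filter (\<lambda>x. x \<in> set ys) (xs @ ys) = ys"
proof -
  assume d: "distinct (xs @ ys)"
  have "filter (\<lambda>x. x \<in> set ys) ys = ys" by (rule filter_True) simp
  moreover have "filter (\<lambda>x. x \<in> set ys) xs = []" using d by (intro filter_False) auto
  ultimately show ?thesis by simp
qed

lemma lift_perm:
  assumes "finite S" "u \<in> Perm (card S)"
  shows "distinct (map (\<lambda>i. sls S ! i) u) \<and> set (map (\<lambda>i. sls S ! i) u) = S"
proof -
  have l: "length (sls S) = card S" and st: "set (sls S) = S" and d: "distinct (sls S)" using assms(1) by auto
  have du: "distinct u" and su: "set u = {0..<card S}" using assms(2) by (auto simp: Perm_def)
  have inj: "inj_on (\<lambda>i. sls S ! i) (set u)" using d l su by (intro inj_on_nth) auto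
  have "set (map (\<lambda>i. sls S ! i) u) = (\<lambda>i. sls S ! i) ` {0..<length (sls S)}" using su l by simp
  also have "\<dots> = set (map (\<lambda>i. sls S ! i) [0..<length (sls S)])" by simp
  also have "\<dots> = set (sls S)" by (simp only: map_nth)
  also have "\<dots> = S" using st .
  finally show ?thesis using du inj by (simp add: distinct_map)
qed

lemma map_sls_rk: "finite S \<Longrightarrow> set xs \<subseteq> S \<Longrightarrow> map (\<lambda>i. sls S ! i) (map (rk S) xs) = xs"
  by (induct xs) (auto simp: rk_in)

lemma map_rk_sls: "finite S \<Longrightarrow> set u \<subseteq> {0..<card S} \<Longrightarrow> map (rk S) (map (\<lambda>i. sls S ! i) u) = u"
  by (induct u) (auto simp: rk_nth)

abbreviation Lset :: "nat option list \<Rightarrow> nat set \<Rightarrow> nat set" where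
  "Lset ps V \<equiv> lea_set ps V"
abbreviation Rset :: "nat option list \<Rightarrow> nat set \<Rightarrow> nat set" where
  "Rset ps V \<equiv> {0..<length ps} - lea_set ps V"

lemma lea_conv: "x \<in> lea_set ps V \<Longrightarrow> z \<in> lea_set ps V \<Longrightarrow> f_reach ps x y \<Longrightarrow> f_reach ps y z \<Longrightarrow> y \<in> lea_set ps V"
  using lea_back by blast

lemma roo_conv: "hforest ps \<Longrightarrow> x \<in> {0..<length ps} - lea_set ps V \<Longrightarrow> z \<in> {0..<length ps} - lea_set ps V
   \<Longrightarrow> f_reach ps x y \<Longrightarrow> f_reach ps y z \<Longrightarrow> y \<in> {0..<length ps} - lea_set ps V"
  using R_forward by blast

definition psi2 :: "nat option list \<Rightarrow> nat set \<times> nat list \<times> nat list \<Rightarrow> nat list \<times> nat" where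
  "psi2 ps x = (case x of (V, u, v) \<Rightarrow>
     (map (\<lambda>i. sls (Rset ps V) ! i) u @ map (\<lambda>i. sls (Lset ps V) ! i) v, card (Rset ps V)))"

lemma SF_sub_Perm: "finite S \<Longrightarrow> u \<in> S_F (sfp ps S) \<Longrightarrow> u \<in> Perm (card S)"
  using S_F_Perm sfp_length by metis

lemma psi2_in:
  assumes hp: "hforest ps" and V: "V \<in> admissible_cuts ps"
    and u: "u \<in> S_F (sfp ps (Rset ps V))" and v: "v \<in> S_F (sfp ps (Lset ps V))"
  shows "map (\<lambda>i. sls (Rset ps V) ! i) u @ map (\<lambda>i. sls (Lset ps V) ! i) v \<in> S_F ps"
proof -
  let ?R = "Rset ps V" and ?L = "Lset ps V"
  let ?A = "map (\<lambda>i. sls ?R ! i) u" and ?B = "map (\<lambda>i. sls ?L ! i) v"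
  have Ln: "?L \<subseteq> {0..<length ps}" by (rule lea_sub[OF V])
  have fR: "finite ?R" and fL: "finite ?L" using Ln finite_subset by auto
  have Rn: "?R \<subseteq> {0..<length ps}" by auto
  have uP: "u \<in> Perm (card ?R)" by (rule SF_sub_Perm[OF fR u])
  have vP: "v \<in> Perm (card ?L)" by (rule SF_sub_Perm[OF fL v])
  have A: "distinct ?A" "set ?A = ?R" using lift_perm[OF fR uP] by auto
  have B: "distinct ?B" "set ?B = ?L" using lift_perm[OF fL vP] by auto
  have hR: "hforest (sfp ps ?R)" by (rule sfp_hforest[OF fR hp Rn])
  have hL: "hforest (sfp ps ?L)" by (rule sfp_hforest[OF fL hp Ln])
  have uB: "\<forall>i j. f_reach (sfp ps ?R) i j \<longrightarrow> before u j i" using u SF_before[OF hR] by blast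
  have vB: "\<forall>i j. f_reach (sfp ps ?L) i j \<longrightarrow> before v j i" using v SF_before[OF hL] by blast
  have convR: "\<And>x y z. x \<in> ?R \<Longrightarrow> z \<in> ?R \<Longrightarrow> f_reach ps x y \<Longrightarrow> f_reach ps y z \<Longrightarrow> y \<in> ?R"
    using R_forward[OF hp] by blast
  have convL: "\<And>x y z. x \<in> ?L \<Longrightarrow> z \<in> ?L \<Longrightarrow> f_reach ps x y \<Longrightarrow> f_reach ps y z \<Longrightarrow> y \<in> ?L"
    using lea_back by blast
  show ?thesis unfolding SF_before[OF hp]
  proof (intro conjI allI impI)
    show "distinct (?A @ ?B)" using A B by auto
    show "set (?A @ ?B) = {0..<length ps}" using A B Ln by auto
    fix i j assume r: "f_reach ps i j"
    have i: "i < length ps" using f_reach_src[OF r] .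
    have j: "j < i" using f_reach_dec[OF hp r] .
    show "before (?A @ ?B) j i"
    proof (cases "i \<in> ?L")
      case True
      show ?thesis
      proof (cases "j \<in> ?L")
        case True
        have ri: "rk ?L i < card ?L" "sls ?L ! rk ?L i = i" using rk_in[OF fL \<open>i \<in> ?L\<close>] by auto
        have rj: "rk ?L j < card ?L" "sls ?L ! rk ?L j = j" using rk_in[OF fL True] by auto
        have RL: "f_reach (sfp ps ?L) (rk ?L i) (rk ?L j) \<longleftrightarrow> rk ?L i < card ?L \<and> rk ?L j < card ?L \<and> f_reach ps (sls ?L ! rk ?L i) (sls ?L ! rk ?L j)"
          by (rule reach_sub[OF fL Ln]) (rule convL)
        have "f_reach (sfp ps ?L) (rk ?L i) (rk ?L j)" unfolding RL using ri rj r by simp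
        hence "before v (rk ?L j) (rk ?L i)" using vB by blast
        hence "before ?B (sls ?L ! rk ?L j) (sls ?L ! rk ?L i)" by (rule before_map_I)
        hence "before ?B j i" using ri rj by simp
        thus ?thesis by (rule before_append_R)
      next
        case False
        hence "j \<in> ?R" using j i by auto
        thus ?thesis using A B \<open>i \<in> ?L\<close> by (intro before_cross) auto
      qed
    next
      case False
      hence iR: "i \<in> ?R" using i by auto
      have jR: "j \<in> ?R" by (rule R_forward[OF hp iR r])
      have ri: "rk ?R i < card ?R" "sls ?R ! rk ?R i = i" using rk_in[OF fR iR] by auto
      have rj: "rk ?R j < card ?R" "sls ?R ! rk ?R j = j" using rk_in[OF fR jR] by auto
      have RR: "f_reach (sfp ps ?R) (rk ?R i) (rk ?R j) \<longleftrightarrow> rk ?R i < card ?R \<and> rk ?R j < card ?R \<and> f_reach ps (sls ?R ! rk ?R i) (sls ?R ! rk ?R j)"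
        by (rule reach_sub[OF fR Rn]) (rule convR)
      have "f_reach (sfp ps ?R) (rk ?R i) (rk ?R j)" unfolding RR using ri rj r by simp
      hence "before u (rk ?R j) (rk ?R i)" using uB by blast
      hence "before ?A (sls ?R ! rk ?R j) (sls ?R ! rk ?R i)" by (rule before_map_I)
      hence "before ?A j i" using ri rj by simp
      thus ?thesis by (rule before_append_L)
    qed
  qed
qed

lemma piece_lift:
  assumes fS: "finite S" and uP: "u \<in> Perm (card S)"
  shows "piece (map (\<lambda>i. sls S ! i) u) l = (u, map (\<lambda>i. l ! i) (sls S))"
proof -
  have A: "set (map (\<lambda>i. sls S ! i) u) = S" using lift_perm[OF fS uP] by auto
  have su: "set u \<subseteq> {0..<card S}" using uP by (auto simp: Perm_def)
  have "std (map (\<lambda>i. sls S ! i) u) = map (rk S) (map (\<lambda>i. sls S ! i) u)"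
    unfolding std_def A rk_def ..
  also have "\<dots> = u" by (rule map_rk_sls[OF fS su])
  finally show ?thesis unfolding piece_def A by simp
qed


lemma sls_nth_in: "finite S \<Longrightarrow> i < card S \<Longrightarrow> sls S ! i \<in> S"
proof -
  assume "finite S" "i < card S"
  hence "i < length (sls S)" by simp
  hence "sls S ! i \<in> set (sls S)" by (rule nth_mem)
  thus ?thesis using \<open>finite S\<close> by simp
qed

definition D2 :: "nat option list \<Rightarrow> (nat set \<times> nat list \<times> nat list) set" where
  "D2 ps = Sigma (admissible_cuts ps) (\<lambda>V. S_F (sfp ps (Rset ps V)) \<times> S_F (sfp ps (Lset ps V)))"

lemma psi2_inj:
  assumes hp: "hforest ps"
  shows "inj_on (psi2 ps) (D2 ps)"
proof (rule inj_onI)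
  fix x y assume x: "x \<in> D2 ps" and y: "y \<in> D2 ps" and e: "psi2 ps x = psi2 ps y"
  obtain V u v where xe: "x = (V, u, v)" by (cases x) auto
  obtain V' u' v' where ye: "y = (V', u', v')" by (cases y) auto
  have V: "V \<in> admissible_cuts ps" and u: "u \<in> S_F (sfp ps (Rset ps V))" and v: "v \<in> S_F (sfp ps (Lset ps V))"
    using x xe by (auto simp: D2_def)
  have V': "V' \<in> admissible_cuts ps" and u': "u' \<in> S_F (sfp ps (Rset ps V'))" and v': "v' \<in> S_F (sfp ps (Lset ps V'))"
    using y ye by (auto simp: D2_def)
  let ?R = "Rset ps V" and ?L = "Lset ps V" and ?R' = "Rset ps V'" and ?L' = "Lset ps V'"
  have Ln: "?L \<subseteq> {0..<length ps}" "?L' \<subseteq> {0..<length ps}" using lea_sub V V' by auto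
  have fR: "finite ?R" "finite ?R'" and fL: "finite ?L" "finite ?L'" using Ln finite_subset by auto
  have uP: "u \<in> Perm (card ?R)" "u' \<in> Perm (card ?R')" using SF_sub_Perm fR u u' by auto
  have vP: "v \<in> Perm (card ?L)" "v' \<in> Perm (card ?L')" using SF_sub_Perm fL v v' by auto
  let ?A = "map (\<lambda>i. sls ?R ! i) u" and ?B = "map (\<lambda>i. sls ?L ! i) v"
  let ?A' = "map (\<lambda>i. sls ?R' ! i) u'" and ?B' = "map (\<lambda>i. sls ?L' ! i) v'"
  have eq: "?A @ ?B = ?A' @ ?B'" and c: "card ?R = card ?R'" using e xe ye by (auto simp: psi2_def)
  have lA: "length ?A = card ?R" "length ?A' = card ?R'" using uP Perm_length by auto
  have "?A = ?A' \<and> ?B = ?B'" using eq lA c by (subst (asm) append_eq_append_conv) auto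
  hence AA: "?A = ?A'" by simp
  have BB: "?B = ?B'" using eq AA by simp
  have "?R = ?R'" using AA lift_perm[OF fR(1) uP(1)] lift_perm[OF fR(2) uP(2)] by simp
  hence LL: "?L = ?L'" using Ln by blast
  have VV: "V = V'" using V_recover[OF V] V_recover[OF V'] LL by simp
  have "u = u'"
  proof -
    have inj: "inj_on (\<lambda>i. sls ?R ! i) (set u \<union> set u')" using uP fR VV
      by (intro inj_on_nth) (auto simp: Perm_def)
    show ?thesis using AA VV inj_on_map_eq_map[OF inj] by simp
  qed
  moreover have "v = v'"
  proof -
    have inj: "inj_on (\<lambda>i. sls ?L ! i) (set v \<union> set v')" using vP fL VV
      by (intro inj_on_nth) (auto simp: Perm_def)
    show ?thesis using BB VV inj_on_map_eq_map[OF inj] by simp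
  qed
  ultimately show "x = y" using xe ye VV by simp
qed

lemma psi2_surj:
  assumes hp: "hforest ps" and w: "w \<in> S_F ps" and k: "k \<le> length ps"
  shows "(w, k) \<in> psi2 ps ` D2 ps"
proof -
  let ?n = "length ps"
  have wP: "w \<in> Perm ?n" by (rule S_F_Perm[OF w])
  have dw: "distinct w" and sw: "set w = {0..<?n}" using wP by (auto simp: Perm_def)
  have lw: "length w = ?n" using Perm_length[OF wP] .
  have wB: "\<forall>i j. f_reach ps i j \<longrightarrow> before w j i" using w SF_before[OF hp] by blast
  define L0 where "L0 = set (drop k w)"
  define V0 where "V0 = Vof ps L0"
  have L0n: "L0 \<subseteq> {0..<?n}" using sw set_drop_subset[of k w] by (simp add: L0_def)
  have bk: "y \<in> L0" if r: "f_reach ps y z" and z: "z \<in> L0" for y z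
  proof -
    have "before w z y" using wB r by blast
    from drop_back[OF dw this] z show "y \<in> L0" by (simp add: L0_def)
  qed
  have V0: "V0 \<in> admissible_cuts ps" unfolding V0_def by (rule Vof_cut[OF L0n])
  have lea: "Lset ps V0 = L0" unfolding V0_def by (rule Vof_lea[OF hp L0n bk])
  have "set (take k w @ drop k w) = set (take k w) \<union> set (drop k w)" by (rule set_append)
  hence "set w = set (take k w) \<union> set (drop k w)" by (simp only: append_take_drop_id)
  hence part: "set (take k w) \<union> set (drop k w) = {0..<?n}" using sw by simp
  have disj: "set (take k w) \<inter> set (drop k w) = {}" by (rule take_drop_disj[OF dw])
  have R0: "Rset ps V0 = set (take k w)" using lea part disj by (auto simp: L0_def)
  let ?R = "Rset ps V0" and ?L = "Lset ps V0"
  have fR: "finite ?R" and fL: "finite ?L" using lea L0n finite_subset by auto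
  have Ln: "?L \<subseteq> {0..<?n}" using lea L0n by simp
  have Rn: "?R \<subseteq> {0..<?n}" by auto
  have cR: "card ?R = k" using R0 distinct_card[of "take k w"] dw k lw by simp
  define u where "u = map (rk ?R) (take k w)"
  define v where "v = map (rk ?L) (drop k w)"
  have dwa: "distinct (take k w @ drop k w)" using dw by simp
  have hR: "hforest (sfp ps ?R)" by (rule sfp_hforest[OF fR hp Rn])
  have hL: "hforest (sfp ps ?L)" by (rule sfp_hforest[OF fL hp Ln])
  have uS: "u \<in> S_F (sfp ps ?R)" unfolding SF_before[OF hR]
  proof (intro conjI allI impI)
    have inj: "inj_on (rk ?R) (set (take k w))"
    proof (rule inj_onI)
      fix a b assume "a \<in> set (take k w)" "b \<in> set (take k w)" "rk ?R a = rk ?R b"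
      hence "a \<in> ?R" "b \<in> ?R" using R0 by auto
      hence "sls ?R ! rk ?R a = a" "sls ?R ! rk ?R b = b" using rk_in[OF fR] by auto
      hence "a = sls ?R ! rk ?R a" "sls ?R ! rk ?R b = b" by auto
      thus "a = b" using \<open>rk ?R a = rk ?R b\<close> by simp
    qed
    show "distinct u" using dw inj by (simp add: u_def distinct_map)
    show "set u = {0..<length (sfp ps ?R)}"
    proof
      show "set u \<subseteq> {0..<length (sfp ps ?R)}" using rk_in[OF fR] R0 sfp_length[OF fR] by (auto simp: u_def)
      show "{0..<length (sfp ps ?R)} \<subseteq> set u"
      proof
        fix i assume "i \<in> {0..<length (sfp ps ?R)}"
        hence i: "i < card ?R" using sfp_length[OF fR] by simp
        hence "sls ?R ! i \<in> ?R" by (rule sls_nth_in[OF fR])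
        moreover have "rk ?R (sls ?R ! i) = i" by (rule rk_nth[OF fR i])
        ultimately have "i \<in> rk ?R ` set (take k w)" using R0 by (intro image_eqI[of i "rk ?R" "sls ?R ! i"]) auto
        thus "i \<in> set u" unfolding u_def by simp
      qed
    qed
    fix a b assume r: "f_reach (sfp ps ?R) a b"
    have RR: "f_reach (sfp ps ?R) a b \<longleftrightarrow> a < card ?R \<and> b < card ?R \<and> f_reach ps (sls ?R ! a) (sls ?R ! b)"
      by (rule reach_sub[OF fR Rn]) (rule roo_conv[OF hp])
    hence ab: "a < card ?R" "b < card ?R" "f_reach ps (sls ?R ! a) (sls ?R ! b)" using r by auto
    have inR: "sls ?R ! a \<in> ?R" "sls ?R ! b \<in> ?R" using ab sls_nth_in[OF fR] by auto
    have "before w (sls ?R ! b) (sls ?R ! a)" using wB ab by blast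
    hence "before (filter (\<lambda>x. x \<in> set (take k w)) (take k w @ drop k w)) (sls ?R ! b) (sls ?R ! a)"
      using inR R0 by (intro before_filter_I) auto
    hence "before (take k w) (sls ?R ! b) (sls ?R ! a)" using filter_app_L[OF dwa] by simp
    hence "before u (rk ?R (sls ?R ! b)) (rk ?R (sls ?R ! a))" unfolding u_def by (rule before_map_I)
    thus "before u b a" using rk_nth[OF fR] ab by simp
  qed
  have vS: "v \<in> S_F (sfp ps ?L)" unfolding SF_before[OF hL]
  proof (intro conjI allI impI)
    have inj: "inj_on (rk ?L) (set (drop k w))"
    proof (rule inj_onI)
      fix a b assume "a \<in> set (drop k w)" "b \<in> set (drop k w)" "rk ?L a = rk ?L b"
      hence "a \<in> ?L" "b \<in> ?L" using lea L0_def by auto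
      hence "sls ?L ! rk ?L a = a" "sls ?L ! rk ?L b = b" using rk_in[OF fL] by auto
      hence "a = sls ?L ! rk ?L a" "sls ?L ! rk ?L b = b" by auto
      thus "a = b" using \<open>rk ?L a = rk ?L b\<close> by simp
    qed
    show "distinct v" using dw inj by (simp add: v_def distinct_map)
    show "set v = {0..<length (sfp ps ?L)}"
    proof
      show "set v \<subseteq> {0..<length (sfp ps ?L)}" using rk_in[OF fL] lea sfp_length[OF fL] by (auto simp: v_def L0_def)
      show "{0..<length (sfp ps ?L)} \<subseteq> set v"
      proof
        fix i assume "i \<in> {0..<length (sfp ps ?L)}"
        hence i: "i < card ?L" using sfp_length[OF fL] by simp
        hence "sls ?L ! i \<in> ?L" by (rule sls_nth_in[OF fL])
        moreover have "rk ?L (sls ?L ! i) = i" by (rule rk_nth[OF fL i])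
        ultimately have "i \<in> rk ?L ` set (drop k w)" using lea L0_def by (intro image_eqI[of i "rk ?L" "sls ?L ! i"]) auto
        thus "i \<in> set v" unfolding v_def by simp
      qed
    qed
    fix a b assume r: "f_reach (sfp ps ?L) a b"
    have RL: "f_reach (sfp ps ?L) a b \<longleftrightarrow> a < card ?L \<and> b < card ?L \<and> f_reach ps (sls ?L ! a) (sls ?L ! b)"
      by (rule reach_sub[OF fL Ln]) (rule lea_conv)
    hence ab: "a < card ?L" "b < card ?L" "f_reach ps (sls ?L ! a) (sls ?L ! b)" using r by auto
    have inL: "sls ?L ! a \<in> ?L" "sls ?L ! b \<in> ?L" using ab sls_nth_in[OF fL] by auto
    have "before w (sls ?L ! b) (sls ?L ! a)" using wB ab by blast
    hence "before (filter (\<lambda>x. x \<in> set (drop k w)) (take k w @ drop k w)) (sls ?L ! b) (sls ?L ! a)"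
      using inL lea L0_def by (intro before_filter_I) auto
    hence "before (drop k w) (sls ?L ! b) (sls ?L ! a)" using filter_app_R[OF dwa] by simp
    hence "before v (rk ?L (sls ?L ! b)) (rk ?L (sls ?L ! a))" unfolding v_def by (rule before_map_I)
    thus "before v b a" using rk_nth[OF fL] ab by simp
  qed
  have "psi2 ps (V0, u, v) = (w, k)"
  proof -
    have "map (\<lambda>i. sls ?R ! i) u = take k w" unfolding u_def by (rule map_sls_rk[OF fR]) (use R0 in simp)
    moreover have "map (\<lambda>i. sls ?L ! i) v = drop k w" unfolding v_def by (rule map_sls_rk[OF fL]) (use lea L0_def in simp)
    ultimately show ?thesis using cR by (simp add: psi2_def)
  qed
  moreover have "(V0, u, v) \<in> D2 ps" using V0 uS vS by (simp add: D2_def)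
  ultimately show ?thesis by (intro image_eqI[of "(w, k)" "psi2 ps" "(V0, u, v)"]) auto
qed

lemma psi2_bij:
  assumes hp: "hforest ps"
  shows "bij_betw (psi2 ps) (D2 ps) (S_F ps \<times> {0..length ps})"
  unfolding bij_betw_def
proof
  show "inj_on (psi2 ps) (D2 ps)" by (rule psi2_inj[OF hp])
  show "psi2 ps ` D2 ps = S_F ps \<times> {0..length ps}"
  proof
    show "psi2 ps ` D2 ps \<subseteq> S_F ps \<times> {0..length ps}"
    proof
      fix y assume "y \<in> psi2 ps ` D2 ps"
      then obtain V u v where x: "(V, u, v) \<in> D2 ps" "y = psi2 ps (V, u, v)" by auto
      have V: "V \<in> admissible_cuts ps" and u: "u \<in> S_F (sfp ps (Rset ps V))" and v: "v \<in> S_F (sfp ps (Lset ps V))"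
        using x by (auto simp: D2_def)
      have "fst y \<in> S_F ps" using psi2_in[OF hp V u v] x(2) by (simp add: psi2_def)
      moreover have "snd y \<le> length ps"
      proof -
        have "card (Rset ps V) \<le> card {0..<length ps}" by (rule card_mono) auto
        thus ?thesis using x(2) by (simp add: psi2_def)
      qed
      ultimately show "y \<in> S_F ps \<times> {0..length ps}" by (cases y) auto
    qed
    show "S_F ps \<times> {0..length ps} \<subseteq> psi2 ps ` D2 ps"
      using psi2_surj[OF hp] by auto
  qed
qed


lemma finite_supp_ind:
  assumes "finite I"
  shows "finite (supp (\<lambda>c. \<Sum>i\<in>I. if h i = c then (1::'k::semiring_1) else 0))"
proof -
  have "supp (\<lambda>c. \<Sum>i\<in>I. if h i = c then (1::'k) else 0) \<subseteq> h ` I"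
  proof
    fix b assume "b \<in> supp (\<lambda>c. \<Sum>i\<in>I. if h i = c then (1::'k) else 0)"
    hence ne: "(\<Sum>i\<in>I. if h i = b then (1::'k) else 0) \<noteq> 0" by (simp add: supp_def)
    show "b \<in> h ` I"
    proof (rule ccontr)
      assume "b \<notin> h ` I"
      hence "(\<Sum>i\<in>I. if h i = b then (1::'k) else 0) = 0" by (intro sum.neutral) auto
      thus False using ne by simp
    qed
  qed
  thus ?thesis using assms by (meson finite_imageI finite_subset)
qed

lemma coprod_basis:
  assumes hp: "hforest ps"
  shows "(\<Sum>w\<in>S_F ps. fq_coprod_basis (w, l) c) =
    (\<Sum>V\<in>admissible_cuts ps. theta_basis (roo (ps, l) V) (fst c) * (theta_basis (lea (ps, l) V) (snd c) :: 'k::comm_semiring_1))"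
proof -
  let ?n = "length ps"
  let ?G = "\<lambda>(w, k). if (piece (take k w) l, piece (drop k w) l) = c then (1::'k) else 0"
  let ?lR = "\<lambda>V. map (\<lambda>i. l ! i) (sls (Rset ps V))" and ?lL = "\<lambda>V. map (\<lambda>i. l ! i) (sls (Lset ps V))"
  let ?H = "\<lambda>(V, u, v). if ((u, ?lR V), (v, ?lL V)) = c then (1::'k) else 0"
  have "(\<Sum>w\<in>S_F ps. fq_coprod_basis (w, l) c) = (\<Sum>w\<in>S_F ps. \<Sum>k\<in>{0..?n}. ?G (w, k))"
  proof (rule sum.cong[OF refl])
    fix w assume "w \<in> S_F ps"
    hence "length w = ?n" by (rule S_F_length)
    thus "fq_coprod_basis (w, l) c = (\<Sum>k\<in>{0..?n}. ?G (w, k))" by (simp add: fq_coprod_basis_def)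
  qed
  also have "\<dots> = (\<Sum>y\<in>S_F ps \<times> {0..?n}. ?G y)" by (simp add: sum.cartesian_product)
  also have "\<dots> = (\<Sum>x\<in>D2 ps. ?G (psi2 ps x))"
    by (rule sum.reindex_bij_betw[symmetric, OF psi2_bij[OF hp]])
  also have "\<dots> = (\<Sum>x\<in>D2 ps. ?H x)"
  proof (rule sum.cong[OF refl])
    fix x assume x: "x \<in> D2 ps"
    obtain V u v where xe: "x = (V, u, v)" by (cases x) auto
    have V: "V \<in> admissible_cuts ps" and u: "u \<in> S_F (sfp ps (Rset ps V))" and v: "v \<in> S_F (sfp ps (Lset ps V))"
      using x xe by (auto simp: D2_def)
    have Ln: "Lset ps V \<subseteq> {0..<?n}" using lea_sub[OF V] .
    have fR: "finite (Rset ps V)" and fL: "finite (Lset ps V)" using Ln finite_subset by auto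
    have uP: "u \<in> Perm (card (Rset ps V))" by (rule SF_sub_Perm[OF fR u])
    have vP: "v \<in> Perm (card (Lset ps V))" by (rule SF_sub_Perm[OF fL v])
    let ?A = "map (\<lambda>i. sls (Rset ps V) ! i) u" and ?B = "map (\<lambda>i. sls (Lset ps V) ! i) v"
    have lA: "length ?A = card (Rset ps V)" using Perm_length[OF uP] by simp
    have "psi2 ps x = (?A @ ?B, card (Rset ps V))" by (simp add: psi2_def xe)
    moreover have "take (card (Rset ps V)) (?A @ ?B) = ?A" "drop (card (Rset ps V)) (?A @ ?B) = ?B"
      using lA by auto
    moreover have "piece ?A l = (u, ?lR V)" by (rule piece_lift[OF fR uP])
    moreover have "piece ?B l = (v, ?lL V)" by (rule piece_lift[OF fL vP])
    ultimately show "?G (psi2 ps x) = ?H x" by (simp add: xe)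
  qed
  also have "\<dots> = (\<Sum>(V, uv)\<in>D2 ps. ?H (V, uv))"
    by (rule sum.cong) auto
  also have "\<dots> = (\<Sum>V\<in>admissible_cuts ps. \<Sum>uv\<in>S_F (sfp ps (Rset ps V)) \<times> S_F (sfp ps (Lset ps V)). ?H (V, uv))"
    unfolding D2_def by (rule sum.Sigma[symmetric]) (auto simp: finite_cuts finite_S_F)
  also have "\<dots> = (\<Sum>V\<in>admissible_cuts ps. theta_basis (roo (ps, l) V) (fst c) * theta_basis (lea (ps, l) V) (snd c))"
  proof (rule sum.cong[OF refl])
    fix V assume V: "V \<in> admissible_cuts ps"
    have r: "roo (ps, l) V = (sfp ps (Rset ps V), ?lR V)" by (simp add: roo_def sub_forest_eq)
    have le: "lea (ps, l) V = (sfp ps (Lset ps V), ?lL V)" by (simp add: lea_def sub_forest_eq)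
    have "theta_basis (roo (ps, l) V) (fst c) * theta_basis (lea (ps, l) V) (snd c)
      = (\<Sum>u\<in>S_F (sfp ps (Rset ps V)). if (u, ?lR V) = fst c then (1::'k) else 0)
        * (\<Sum>v\<in>S_F (sfp ps (Lset ps V)). if (v, ?lL V) = snd c then (1::'k) else 0)"
      unfolding r le theta_basis_def by simp
    also have "\<dots> = (\<Sum>u\<in>S_F (sfp ps (Rset ps V)). \<Sum>v\<in>S_F (sfp ps (Lset ps V)).
        (if (u, ?lR V) = fst c then (1::'k) else 0) * (if (v, ?lL V) = snd c then (1::'k) else 0))"
      by (rule sum_product)
    also have "\<dots> = (\<Sum>u\<in>S_F (sfp ps (Rset ps V)). \<Sum>v\<in>S_F (sfp ps (Lset ps V)). ?H (V, u, v))"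
      by (intro sum.cong refl) (cases c, auto)
    also have "\<dots> = (\<Sum>uv\<in>S_F (sfp ps (Rset ps V)) \<times> S_F (sfp ps (Lset ps V)). ?H (V, uv))"
      by (simp add: sum.cartesian_product split_def)
    finally show "(\<Sum>uv\<in>S_F (sfp ps (Rset ps V)) \<times> S_F (sfp ps (Lset ps V)). ?H (V, uv))
      = theta_basis (roo (ps, l) V) (fst c) * theta_basis (lea (ps, l) V) (snd c)" by simp
  qed
  finally show ?thesis .
qed

lemma HCB_ind: "H_coprod_basis F = (\<lambda>c. \<Sum>V\<in>admissible_cuts (fst F). if (roo F V, lea F V) = c then 1 else 0)"
  unfolding H_coprod_basis_def ..

lemma Theta_coprod:
  assumes x: "x \<in> fvec (HF d)"
  shows "F_coprod (Theta x) = tensor_map Theta Theta (H_coprod x :: dforest \<times> dforest \<Rightarrow> 'k::field)"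
proof (rule ext)
  fix c
  have fx: "finite (supp x)" using x by (simp add: fvec_def)
  have hx: "\<And>a. a \<in> supp x \<Longrightarrow> hforest (fst a)" using x HF_hforest by (auto simp: fvec_def)
  let ?T = "\<lambda>(a, b) (c, e). Theta (bvec a :: dforest \<Rightarrow> 'k) c * Theta (bvec b :: dforest \<Rightarrow> 'k) e"
  have "F_coprod (Theta x) c = (\<Sum>a\<in>supp x. x a * lin_ext fq_coprod_basis (theta_basis a) c)"
    unfolding F_coprod_def Theta_as_lin by (rule lin_ext_comp) (auto simp: fx finite_supp_theta)
  also have "\<dots> = (\<Sum>a\<in>supp x. x a * (\<Sum>w\<in>S_F (fst a). fq_coprod_basis (w, snd a) c))"
    by (simp add: lin_ext_theta)
  also have "\<dots> = (\<Sum>a\<in>supp x. x a * lin_ext ?T (H_coprod_basis a) c)"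
  proof (rule sum.cong[OF refl])
    fix a assume a: "a \<in> supp x"
    have "lin_ext ?T (H_coprod_basis a) c = (\<Sum>V\<in>admissible_cuts (fst a). ?T (roo a V, lea a V) c)"
      unfolding HCB_ind by (rule lin_ext_ind[OF finite_cuts])
    also have "\<dots> = (\<Sum>V\<in>admissible_cuts (fst a). theta_basis (roo a V) (fst c) * theta_basis (lea a V) (snd c))"
      by (simp add: Theta_bvec case_prod_unfold)
    also have "\<dots> = (\<Sum>w\<in>S_F (fst a). fq_coprod_basis (w, snd a) c)"
      using coprod_basis[OF hx[OF a], of "snd a" c, where 'k='k] by simp
    finally show "x a * (\<Sum>w\<in>S_F (fst a). fq_coprod_basis (w, snd a) c) = x a * lin_ext ?T (H_coprod_basis a) c"
      by simp
  qed
  also have "\<dots> = lin_ext ?T (H_coprod x) c"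
    unfolding H_coprod_def by (rule lin_ext_comp[symmetric]) (auto simp: fx HCB_ind finite_supp_ind finite_cuts)
  also have "\<dots> = tensor_map Theta Theta (H_coprod x) c" unfolding tensor_map_def ..
  finally show "F_coprod (Theta x) c = tensor_map Theta Theta (H_coprod x) c" .
qed


theorem mainTheorem11:
  fixes d :: nat
  assumes "d \<ge> 1"
  shows "bij_betw (Theta :: (dforest \<Rightarrow> 'k::field) \<Rightarrow> dperm \<Rightarrow> 'k) (fvec (HF d)) (fvec (DP d))
    \<and> (\<forall>x\<in>fvec (HF d). \<forall>y\<in>fvec (HF d). \<forall>c::'k.
          Theta (\<lambda>F. c * x F + y F) = (\<lambda>p. c * Theta x p + Theta y p))
    \<and> Theta (H_unit :: dforest \<Rightarrow> 'k) = F_unit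
    \<and> (\<forall>x\<in>fvec (HF d). \<forall>y\<in>fvec (HF d).
          Theta (H_mult x y :: dforest \<Rightarrow> 'k) = F_mult (Theta x) (Theta y))
    \<and> (\<forall>x\<in>fvec (HF d).
          F_coprod (Theta x) = tensor_map Theta Theta (H_coprod x :: dforest \<times> dforest \<Rightarrow> 'k))
    \<and> (\<forall>x\<in>fvec (HF d). F_counit (Theta x) = (H_counit x :: 'k))
    \<and> (\<forall>n. \<forall>x\<in>fvec (HF d). supp (x :: dforest \<Rightarrow> 'k) \<subseteq> {F. hdeg F = n}
          \<longrightarrow> supp (Theta x) \<subseteq> {p. pdeg p = n})"
proof (intro conjI)
  show "bij_betw (Theta :: (dforest \<Rightarrow> 'k::field) \<Rightarrow> dperm \<Rightarrow> 'k) (fvec (HF d)) (fvec (DP d))"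
    by (rule Theta_bij)
  show "\<forall>x\<in>fvec (HF d). \<forall>y\<in>fvec (HF d). \<forall>c::'k.
          Theta (\<lambda>F. c * x F + y F) = (\<lambda>p. c * Theta x p + Theta y p)"
  proof (intro ballI allI)
    fix x y :: "dforest \<Rightarrow> 'k" and c :: 'k
    assume "x \<in> fvec (HF d)" "y \<in> fvec (HF d)"
    hence "finite (supp x)" "finite (supp y)" by (auto simp: fvec_def)
    thus "Theta (\<lambda>F. c * x F + y F) = (\<lambda>p. c * Theta x p + Theta y p)" by (rule Theta_linear)
  qed
  show "Theta (H_unit :: dforest \<Rightarrow> 'k) = F_unit" by (rule Theta_unit)
  show "\<forall>x\<in>fvec (HF d). \<forall>y\<in>fvec (HF d).
          Theta (H_mult x y :: dforest \<Rightarrow> 'k) = F_mult (Theta x) (Theta y)"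
    using Theta_mult by blast
  show "\<forall>x\<in>fvec (HF d).
          F_coprod (Theta x) = tensor_map Theta Theta (H_coprod x :: dforest \<times> dforest \<Rightarrow> 'k)"
    using Theta_coprod by blast
  show "\<forall>x\<in>fvec (HF d). F_counit (Theta x) = (H_counit x :: 'k)"
    using Theta_counit by blast
  show "\<forall>n. \<forall>x\<in>fvec (HF d). supp (x :: dforest \<Rightarrow> 'k) \<subseteq> {F. hdeg F = n}
          \<longrightarrow> supp (Theta x) \<subseteq> {p. pdeg p = n}"
    using Theta_grading by blast
qed

end
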